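(* Let $n,m\ge1$, let $\mathbb{U}$ be an input space, let $f:\mathbb{R}^n\times\mathbb{U}\to\mathbb{R}^m$ and $h:\mathbb{R}^n\to\mathbb{Y}$ be known measurable functions, and let $\Sigma\in\mathbb{R}^{n\times n}$ be a symmetric positive definite covariance matrix. For $\theta\in\mathbb{R}^{m\times n}$ let $\mathbf M(\theta)$ be the system $x_{k+1}=\theta^{\top}f(x_k,u_k)+w_k$, $y_k=h(x_k)$, with state space $\mathbb{R}^n$ and i.i.d. $w_k\sim\mathcal N(0,\Sigma)$, i.e. transition kernel $\mathbf t(dx^+\mid x,u;\theta)=\mathcal N(dx^+\mid\theta^{\top}f(x,u),\Sigma)$. Given data $\mathcal D$, let $\hat\theta\in\mathbb{R}^{m\times n}$, $\Sigma_N$ and $\Theta$ be the Bayesian linear regression estimate, posterior covariance and credible set at confidence $1-\alpha\in(0,1)$ (defined in the context), and let $\widehat{\mathbf M}=\mathbf M(\hat\theta)$, i.e. $\hat x_{k+1}=\hat\theta^{\top}f(\hat x_k,\hat u_k)+\hat w_k$, $\hat y_k=h(\hat x_k)$, $\hat w_k\sim\mathcal N(0,\Sigma)$, with the same initial state as $\mathbf M(\theta)$. Use the interface function $u=\hat u$ (i.e. $\mathcal I(\cdot\mid\hat x,x,\hat u)=\delta_{\hat u}$), the relation $\mathcal R=\{(\hat x,x)\in\mathbb{R}^n\times\mathbb{R}^n: \hat x=x\}$, and for $\theta\in\Theta$ the sub-probability kernel $$\boldsymbol v(A\mid\hat x,x,\hat u;\theta)=\int_{\mathbb{R}^n}\mathbf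 1_A\big(\hat\theta^{\top}f(\hat x,\hat u)+\gamma+w,\ \theta^{\top}f(x,\hat u)+w\big)\min\{\phi_\Sigma(w),\phi_\Sigma(w+\gamma)\}\,dw,$$ where $\gamma=\gamma(x,\hat u,\theta):=(\theta-\hat\theta)^{\top}f(x,\hat u)$ and $\phi_\Sigma$ is the density of $\mathcal N(0,\Sigma)$. Then for every $\theta\in\Theta$: (i) $\widehat{\mathbf M}$ is in an $(\varepsilon,\delta)$-sub-simulation relation with $\mathbf M(\theta)$ with $\varepsilon=0$ and state-dependent $$\delta(\hat x,\hat u)=1-2\,\mathrm{cdf}\Big(-\tfrac{\sqrt r}{2}\,\|f(\hat x,\hat u)\|\Big),\qquad r:=\|\Sigma^{-1}\|\,\|\Sigma_N\|\cdot n\cdot\chi^{-1}(1-\alpha\mid n),$$ meaning: $(\hat x_0,x_0)\in\mathcal R$; for all $(\hat x,x)\in\mathcal R$ and $\hat u\in\mathbb{U}$, $\boldsymbol v(\cdot\mid\hat x,x,\hat u;\theta)$ is a measure on $\mathbb{R}^n\times\mathbb{R}^n$ with $1\ge\boldsymbol v(\mathbb{R}^n\times\mathbb{R}^n)=\boldsymbol v(\mathcal R)\ge1-\delta(\hat x,\hat u)$, $\boldsymbol v(A\times\mathbb{R}^n)\le\mathcal N(A\mid\hat\theta^{\top}f(\hat x,\hat u),\Sigma)$ and $\boldsymbol v(\mathbb{R}^n\times B)\le\mathcal N(B\mid\theta^{\top}f(x,\hat u),\Sigma)$ for all measurable $A,B$; and $h(\hat x)=h(x)$ on $\mathcal R$;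 (ii) the deterministic, $\theta$-independent state mapping $\mathbf s(\cdot\mid\hat x,x,x^+,\hat u)=\delta_{x^{+}+\hat\theta^{\top}(f(\hat x,\hat u)-f(x,\hat u))}$ defines a valid control refinement, i.e. for all $(\hat x,x)\in\mathcal R$, $\hat u\in\mathbb{U}$ and measurable $A\subset\mathbb{R}^n\times\mathbb{R}^n$, $$\int_{\mathbb{R}^n}\mathbf 1_A\big(x^{+}+\hat\theta^{\top}(f(\hat x,\hat u)-f(x,\hat u)),\,x^{+}\big)\,\mathcal N(dx^{+}\mid\theta^{\top}f(x,\hat u),\Sigma)\ \ge\ \boldsymbol v(A\mid\hat x,x,\hat u;\theta).$$
   Context: Bayesian linear regression: the data are $\mathcal D=\{(x^{(i)},u^{(i)},x^{+(i)})\}_{i=1}^N$ with $x^{+(i)}=\theta^{\ast\top}f(x^{(i)},u^{(i)})+w^{(i)}$. Write $\theta=[\theta_1,\dots,\theta_n]$ with columns $\theta_j\in\mathbb{R}^m$ and $\bar\theta=[\theta_1;\dots;\theta_n]\in\mathbb{R}^{nm}$. With prior $\mathcal N(\bar\theta\mid\mu_0,\Sigma_0)$, design matrix $\Phi\in\mathbb{R}^{N\times m}$ with rows $f(x^{(i)},u^{(i)})^{\top}$, and $X^+$ the stacked vector $[x^{+(1)}_1;\dots;x^{+(N)}_1;\dots;x^{+(1)}_n;\dots;x^{+(N)}_n]$, the posterior is $\mathcal N(\bar\theta\mid\mu_N,\Sigma_N)$ with $\Sigma_N^{-1}=\Sigma_0^{-1}+\Sigma^{-1}\otimes\Phi^{\top}\Phi$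 and $\mu_N=\Sigma_N(\Sigma_0^{-1}\mu_0+(\Sigma^{-1}\otimes\Phi^{\top})X^+)$ ($\otimes$ the Kronecker product). The estimate $\hat\theta\in\mathbb{R}^{m\times n}$ has columns the consecutive $m$-blocks of $\mu_N$. The credible set is $\Theta=\{\theta\in\mathbb{R}^{m\times n}:(\bar\theta-\mu_N)^{\top}\Sigma_N^{-1}(\bar\theta-\mu_N)\le n\,\chi^{-1}(1-\alpha\mid n)\}$, where $\chi^{-1}(\cdot\mid n)$ is the quantile function of the chi-squared distribution with $n$ degrees of freedom. $\mathrm{cdf}$ is the standard normal cumulative distribution function, $\|\cdot\|$ is the Euclidean norm on vectors and the induced spectral norm on matrices, $\mathcal N(\cdot\mid\mu,\Sigma)$ the Gaussian measure, and $\delta_a$ the Dirac measure at $a$. *)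

theory Defs
  imports "HOL-Probability.Probability"
begin

definition pos_def :: "real^'n^'n \<Rightarrow> bool" where
  "pos_def S \<longleftrightarrow> transpose S = S \<and> (\<forall>x. x \<noteq> 0 \<longrightarrow> 0 < x \<bullet> (S *v x))"

definition gauss_density :: "real^'n^'n \<Rightarrow> real^'n \<Rightarrow> real" where
  "gauss_density S w =
     exp (- (w \<bullet> (matrix_inv S *v w)) / 2) / sqrt ((2 * pi) ^ CARD('n) * det S)"

definition gauss :: "real^'n \<Rightarrow> real^'n^'n \<Rightarrow> (real^'n) measure" where
  "gauss mu S = density lborel (\<lambda>x. ennreal (gauss_density S (x - mu)))"

definition std_normal_cdf :: "real \<Rightarrow> real" where
  "std_normal_cdf t = measure (density lborel std_normal_density) {..t}"

definition chi2_density :: "nat \<Rightarrow> real \<Rightarrow> real" where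
  "chi2_density k x = (if 0 < x then x powr (real k / 2 - 1) * exp (- x / 2)
                        / (2 powr (real k / 2) * Gamma (real k / 2)) else 0)"

definition chi2_cdf :: "nat \<Rightarrow> real \<Rightarrow> real" where
  "chi2_cdf k t = measure (density lborel (\<lambda>x. ennreal (chi2_density k x))) {..t}"

definition chi2_quantile :: "nat \<Rightarrow> real \<Rightarrow> real" where
  "chi2_quantile k p = Inf {t. p \<le> chi2_cdf k t}"

text \<open>Kronecker product; the index (j,i) of the stacked vector/matrix refers to
  entry i of block j.\<close>
definition kron :: "real^'a^'a \<Rightarrow> real^'b^'b \<Rightarrow> real^('a \<times> 'b)^('a \<times> 'b)" where
  "kron A B = (\<chi> p q. A $ fst p $ fst q * B $ snd p $ snd q)"

text \<open>theta :: real^'n^'m is an m x n matrix (row index in 'm, column index in 'n).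
  vec_theta stacks its columns: vec_theta theta $ (j,i) = theta_{i j}.\<close>
definition vec_theta :: "real^'n^'m \<Rightarrow> real^('n \<times> 'm)" where
  "vec_theta th = (\<chi> p. th $ snd p $ fst p)"

definition unvec_theta :: "real^('n \<times> 'm) \<Rightarrow> real^'n^'m" where
  "unvec_theta v = (\<chi> i j. v $ (j, i))"

text \<open>Bayesian linear regression. Data: N samples (xs i, us i, xps i), i < N.
  PhiTPhi = Phi^T Phi; blr_rhs = (Sigma^-1 \<otimes> Phi^T) X^+ written out entrywise.\<close>
definition PhiTPhi :: "('x \<Rightarrow> 'u \<Rightarrow> real^'m) \<Rightarrow> nat \<Rightarrow> (nat \<Rightarrow> 'x) \<Rightarrow> (nat \<Rightarrow> 'u) \<Rightarrow> real^'m^'m" where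
  "PhiTPhi f N xs us = (\<chi> k l. \<Sum>i<N. f (xs i) (us i) $ k * f (xs i) (us i) $ l)"

definition blr_rhs :: "real^'n^'n \<Rightarrow> ('x \<Rightarrow> 'u \<Rightarrow> real^'m) \<Rightarrow> nat \<Rightarrow> (nat \<Rightarrow> 'x)
    \<Rightarrow> (nat \<Rightarrow> 'u) \<Rightarrow> (nat \<Rightarrow> real^'n) \<Rightarrow> real^('n \<times> 'm)" where
  "blr_rhs S f N xs us xps = (\<chi> p. \<Sum>j'\<in>UNIV. matrix_inv S $ fst p $ j' *
       (\<Sum>i<N. f (xs i) (us i) $ snd p * xps i $ j'))"

definition blr_SigmaN_inv :: "real^'n^'n \<Rightarrow> real^('n \<times> 'm)^('n \<times> 'm) \<Rightarrow> ('x \<Rightarrow> 'u \<Rightarrow> real^'m)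
    \<Rightarrow> nat \<Rightarrow> (nat \<Rightarrow> 'x) \<Rightarrow> (nat \<Rightarrow> 'u) \<Rightarrow> real^('n \<times> 'm)^('n \<times> 'm)" where
  "blr_SigmaN_inv S S0 f N xs us = matrix_inv S0 + kron (matrix_inv S) (PhiTPhi f N xs us)"

definition blr_SigmaN :: "real^'n^'n \<Rightarrow> real^('n \<times> 'm)^('n \<times> 'm) \<Rightarrow> ('x \<Rightarrow> 'u \<Rightarrow> real^'m)
    \<Rightarrow> nat \<Rightarrow> (nat \<Rightarrow> 'x) \<Rightarrow> (nat \<Rightarrow> 'u) \<Rightarrow> real^('n \<times> 'm)^('n \<times> 'm)" where
  "blr_SigmaN S S0 f N xs us = matrix_inv (blr_SigmaN_inv S S0 f N xs us)"

definition blr_muN :: "real^'n^'n \<Rightarrow> real^('n \<times> 'm)^('n \<times> 'm) \<Rightarrow> real^('n \<times> 'm)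
    \<Rightarrow> ('x \<Rightarrow> 'u \<Rightarrow> real^'m) \<Rightarrow> nat \<Rightarrow> (nat \<Rightarrow> 'x) \<Rightarrow> (nat \<Rightarrow> 'u) \<Rightarrow> (nat \<Rightarrow> real^'n)
    \<Rightarrow> real^('n \<times> 'm)" where
  "blr_muN S S0 mu0 f N xs us xps =
     blr_SigmaN S S0 f N xs us *v (matrix_inv S0 *v mu0 + blr_rhs S f N xs us xps)"

definition blr_estimate :: "real^'n^'n \<Rightarrow> real^('n \<times> 'm)^('n \<times> 'm) \<Rightarrow> real^('n \<times> 'm)
    \<Rightarrow> ('x \<Rightarrow> 'u \<Rightarrow> real^'m) \<Rightarrow> nat \<Rightarrow> (nat \<Rightarrow> 'x) \<Rightarrow> (nat \<Rightarrow> 'u) \<Rightarrow> (nat \<Rightarrow> real^'n)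
    \<Rightarrow> real^'n^'m" where
  "blr_estimate S S0 mu0 f N xs us xps = unvec_theta (blr_muN S S0 mu0 f N xs us xps)"

definition credible_set :: "real^'n^'n \<Rightarrow> real^('n \<times> 'm)^('n \<times> 'm) \<Rightarrow> real^('n \<times> 'm)
    \<Rightarrow> ('x \<Rightarrow> 'u \<Rightarrow> real^'m) \<Rightarrow> nat \<Rightarrow> (nat \<Rightarrow> 'x) \<Rightarrow> (nat \<Rightarrow> 'u) \<Rightarrow> (nat \<Rightarrow> real^'n)
    \<Rightarrow> real \<Rightarrow> (real^'n^'m) set" where
  "credible_set S S0 mu0 f N xs us xps \<alpha> =
     {th. let d = vec_theta th - blr_muN S S0 mu0 f N xs us xps in
          d \<bullet> (blr_SigmaN_inv S S0 f N xs us *v d)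
            \<le> real CARD('n) * chi2_quantile CARD('n) (1 - \<alpha>)}"

definition sim_rel :: "('a \<times> 'a) set" where
  "sim_rel = {(a, b). a = b}"

definition sub_kernel :: "real^'n^'n \<Rightarrow> ('x \<Rightarrow> 'u \<Rightarrow> real^'m) \<Rightarrow> real^'n^'m \<Rightarrow> real^'n^'m
    \<Rightarrow> 'x \<Rightarrow> 'x \<Rightarrow> 'u \<Rightarrow> ((real^'n) \<times> (real^'n)) set \<Rightarrow> ennreal" where
  "sub_kernel S f thh th xh x u A =
     (let \<gamma> = transpose (th - thh) *v f x u in
      \<integral>\<^sup>+ w. indicator A (transpose thh *v f xh u + \<gamma> + w, transpose th *v f x u + w)
             * ennreal (min (gauss_density S w) (gauss_density S (w + \<gamma>))) \<partial>lborel)"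

end

theory Submission
  imports Defs
begin

lemma lborel_split:
  fixes p :: "'n::finite" and F :: "real^'n \<Rightarrow> ennreal"
  assumes F[measurable]: "F \<in> borel_measurable borel"
  shows "(\<integral>\<^sup>+x. F x \<partial>lborel) =
    (\<integral>\<^sup>+f. (\<integral>\<^sup>+t. F ((\<Sum>b\<in>Basis-{axis p 1}. f b *\<^sub>R b) + t *\<^sub>R axis p 1) \<partial>lborel)
      \<partial>(\<Pi>\<^sub>M b\<in>Basis-{axis p 1}. (lborel::real measure)))"
proof -
  interpret P: product_sigma_finite "\<lambda>_::real^'n. lborel::real measure"
    by standard
  have ins: "Basis = insert (axis p 1) (Basis - {axis p (1::real)})"
    by (auto simp: Basis_vec_def)
  have "(\<integral>\<^sup>+x. F x \<partial>(lborel::(real^'n) measure)) =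
     (\<integral>\<^sup>+f. F (\<Sum>b\<in>Basis. f b *\<^sub>R b) \<partial>(\<Pi>\<^sub>M b\<in>Basis. (lborel::real measure)))"
    by (subst lborel_eq[where 'a="real^'n"]) (simp add: nn_integral_distr)
  also have "\<dots> = (\<integral>\<^sup>+f. F (\<Sum>b\<in>Basis. f b *\<^sub>R b) \<partial>(\<Pi>\<^sub>M b\<in>insert (axis p 1) (Basis - {axis p (1::real)}). (lborel::real measure)))"
    using ins by simp
  also have "\<dots> = (\<integral>\<^sup>+f. (\<integral>\<^sup>+t. F (\<Sum>b\<in>Basis. (f(axis p 1 := t)) b *\<^sub>R b) \<partial>lborel)
      \<partial>(\<Pi>\<^sub>M b\<in>Basis-{axis p 1}. (lborel::real measure)))"
    by (subst P.product_nn_integral_insert) simp_all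
  also have "\<dots> = (\<integral>\<^sup>+f. (\<integral>\<^sup>+t. F ((\<Sum>b\<in>Basis-{axis p 1}. f b *\<^sub>R b) + t *\<^sub>R axis p 1) \<partial>lborel)
      \<partial>(\<Pi>\<^sub>M b\<in>Basis-{axis p 1}. (lborel::real measure)))"
  proof (intro nn_integral_cong arg_cong[where f=F])
    fix f :: "real^'n \<Rightarrow> real" and t :: real
    have "(\<Sum>b\<in>Basis. (f(axis p 1 := t)) b *\<^sub>R b) = (f(axis p 1 := t)) (axis p 1) *\<^sub>R axis p 1 + (\<Sum>b\<in>Basis-{axis p 1}. (f(axis p 1 := t)) b *\<^sub>R b)"
      by (subst sum.remove[of _ "axis p 1"]) (auto simp: Basis_vec_def)
    also have "\<dots> = t *\<^sub>R axis p 1 + (\<Sum>b\<in>Basis-{axis p 1}. f b *\<^sub>R b)"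
      by (auto intro!: sum.cong)
    finally show "(\<Sum>b\<in>Basis. (f(axis p 1 := t)) b *\<^sub>R b) = (\<Sum>b\<in>Basis-{axis p 1}. f b *\<^sub>R b) + t *\<^sub>R axis p 1"
      by simp
  qed
  finally show ?thesis .
qed
lemma lborel_shear_inv:
  fixes p :: "'n::finite" and g :: "real^'n \<Rightarrow> ennreal" and c :: "real^'n"
  assumes cp: "c $ p = 0" and g[measurable]: "g \<in> borel_measurable borel"
  shows "(\<integral>\<^sup>+x. g (x - (c \<bullet> x) *\<^sub>R axis p 1) \<partial>lborel) = (\<integral>\<^sup>+x. g x \<partial>lborel)"
proof -
  have m: "(\<lambda>x. g (x - (c \<bullet> x) *\<^sub>R axis p 1)) \<in> borel_measurable borel"
    by measurable
  show ?thesis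
  proof (subst lborel_split[OF m, of p], subst lborel_split[OF g, of p], rule nn_integral_cong)
    fix f :: "real^'n \<Rightarrow> real"
    let ?r = "(\<Sum>b\<in>Basis-{axis p 1}. f b *\<^sub>R b)"
    have cax: "c \<bullet> axis p 1 = 0" using cp by (simp add: inner_axis)
    have ct: "c \<bullet> (?r + t *\<^sub>R axis p 1) = c \<bullet> ?r" for t
      using cp by (simp add: inner_add_right inner_axis cax)
    have "(\<integral>\<^sup>+t. g (?r + t *\<^sub>R axis p 1 - (c \<bullet> (?r + t *\<^sub>R axis p 1)) *\<^sub>R axis p 1) \<partial>lborel)
        = (\<integral>\<^sup>+t. g (?r + (- (c \<bullet> ?r) + 1 * t) *\<^sub>R axis p 1) \<partial>lborel)"
      by (intro nn_integral_cong) (simp add: cax inner_add_right algebra_simps)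
    also have "\<dots> = (\<integral>\<^sup>+t. g (?r + t *\<^sub>R axis p 1) \<partial>lborel)"
      by (subst nn_integral_real_affine[where c=1 and t="- (c \<bullet> ?r)"]) (simp_all)
    finally show "(\<integral>\<^sup>+t. g (?r + t *\<^sub>R axis p 1 - (c \<bullet> (?r + t *\<^sub>R axis p 1)) *\<^sub>R axis p 1) \<partial>lborel)
        = (\<integral>\<^sup>+t. g (?r + t *\<^sub>R axis p 1) \<partial>lborel)" .
  qed
qed
definition shear :: "'n::finite \<Rightarrow> real^'n \<Rightarrow> real^'n^'n" where
  "shear p c = (\<chi> i j. (if i = j then 1 else 0) - (if i = p then c $ j else 0))"

lemma shear_mult: "shear p c *v x = x - (c \<bullet> x) *\<^sub>R axis p 1"
proof -
  have "(shear p c *v x) $ i = (x - (c \<bullet> x) *\<^sub>R axis p 1) $ i" for i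
  proof -
    have "(shear p c *v x) $ i = (\<Sum>j\<in>UNIV. (if i = j then 1 else 0) * x$j) - (\<Sum>j\<in>UNIV. (if i = p then c$j else 0) * x$j)"
      by (simp add: matrix_vector_mult_def shear_def sum_subtractf left_diff_distrib)
    also have "(\<Sum>j\<in>UNIV. (if i = j then 1 else 0) * x$j) = x $ i"
      by (simp add: if_distrib[of "\<lambda>a. a * _"] sum.delta cong: if_cong)
    also have "(\<Sum>j\<in>UNIV. (if i = p then c$j else 0) * x$j) = (if i = p then c \<bullet> x else 0)"
      by (simp add: inner_vec_def)
    finally show ?thesis by (simp add: axis_def)
  qed
  then show ?thesis by (simp add: vec_eq_iff)
qed
lemma det_shear:
  fixes c :: "real^'n::finite"
  assumes cp: "c $ p = 0"
  shows "det (shear p c) = 1"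
proof -
  have eq: "shear p c = (\<chi> k. if k = p then row p (mat 1) + (- c) else row k (mat 1))"
    unfolding shear_def by (simp add: vec_eq_iff row_def mat_def)
  have "(\<Sum>j\<in>UNIV-{p}. (- (c $ j)) *s row j (mat 1)) $ i = - c $ i" for i
  proof -
    have "(\<Sum>x\<in>UNIV - {p}. - (c $ x * (if x = i then 1 else 0))) = (\<Sum>x\<in>UNIV - {p}. (if x = i then - c$x else 0))"
      by (rule sum.cong) auto
    then show ?thesis using cp by (simp add: sum_component row_def mat_def sum.delta')
  qed
  then have "- c = (\<Sum>j\<in>UNIV-{p}. (- (c $ j)) *s row j (mat 1))"
    by (simp add: vec_eq_iff)
  also have "\<dots> \<in> vec.span {row j (mat 1) | j. j \<noteq> p}"
    by (intro vec.span_sum vec.span_scale vec.span_base) auto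
  finally have "- c \<in> vec.span {row j (mat 1 :: real^'n^'n) | j. j \<noteq> p}" .
  from det_row_span[OF this] show ?thesis
    by (simp add: eq)
qed
lemma mvmult_measurable: "(\<lambda>x. (E::real^'n::finite^'m::finite) *v x) \<in> borel_measurable borel"
  by (intro borel_measurable_continuous_onI linear_continuous_on matrix_vector_mul_bounded_linear)
definition lb_inv :: "real^'n::finite^'n \<Rightarrow> bool" where
  "lb_inv E \<longleftrightarrow> (\<forall>g \<in> borel_measurable borel. (\<integral>\<^sup>+x. g (E *v x) \<partial>lborel) = (\<integral>\<^sup>+x. g x \<partial>lborel))"

lemma lb_inv_I: "lb_inv (mat 1)"
  by (simp add: lb_inv_def)

lemma lb_inv_mult:
  assumes "lb_inv E" "lb_inv F"
  shows "lb_inv (E ** F)"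
  unfolding lb_inv_def
proof (intro ballI)
  fix g :: "real^'a \<Rightarrow> ennreal" assume g: "g \<in> borel_measurable borel"
  have gE: "(\<lambda>y. g (E *v y)) \<in> borel_measurable borel"
    using measurable_compose[OF mvmult_measurable g] .
  have "(\<integral>\<^sup>+x. g ((E ** F) *v x) \<partial>lborel) = (\<integral>\<^sup>+x. (\<lambda>y. g (E *v y)) (F *v x) \<partial>lborel)"
    by (simp add: matrix_vector_mul_assoc)
  also have "\<dots> = (\<integral>\<^sup>+x. g (E *v x) \<partial>lborel)"
    using bspec[OF assms(2)[unfolded lb_inv_def] gE] by simp
  also have "\<dots> = (\<integral>\<^sup>+x. g x \<partial>lborel)"
    using bspec[OF assms(1)[unfolded lb_inv_def] g] by simp
  finally show "(\<integral>\<^sup>+x. g ((E ** F) *v x) \<partial>lborel) = (\<integral>\<^sup>+x. g x \<partial>lborel)" .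
qed

lemma lb_inv_shear:
  assumes "c $ p = 0"
  shows "lb_inv (shear p c)"
  unfolding lb_inv_def shear_mult using lborel_shear_inv[OF assms] by blast
lemma sym_bf:
  fixes A :: "real^'n::finite^'n"
  assumes "transpose A = A"
  shows "x \<bullet> (A *v y) = y \<bullet> (A *v x)"
proof -
  have "x \<bullet> (A *v y) = (x v* A) \<bullet> y" by (simp add: dot_lmul_matrix)
  also have "x v* A = transpose A *v x" by simp
  also have "\<dots> = A *v x" using assms by simp
  finally show ?thesis by (simp add: inner_commute)
qed

lemma det_nz_ker:
  fixes E :: "real^'n::finite^'n"
  assumes "det E \<noteq> 0" "E *v x = 0"
  shows "x = 0"
proof -
  have "invertible E" using assms(1) by (simp add: invertible_det_nz)
  then obtain B where "B ** E = mat 1" unfolding invertible_def by blast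
  then have "\<forall>x. E *v x = 0 \<longrightarrow> x = 0" using matrix_left_invertible_ker by blast
  with assms(2) show ?thesis by blast
qed

lemma diag_step:
  fixes A E :: "real^'n::finite^'n"
  assumes sym: "transpose A = A" and pd: "\<forall>x. x \<noteq> 0 \<longrightarrow> 0 < x \<bullet> (A *v x)"
    and E: "lb_inv E" "det E = 1"
    and hJ: "\<forall>i\<in>J. \<forall>j. j \<noteq> i \<longrightarrow> (E *v axis i 1) \<bullet> (A *v (E *v axis j 1)) = 0"
    and p: "p \<notin> J"
  shows "\<exists>E'. lb_inv E' \<and> det E' = 1
    \<and> (\<forall>i\<in>insert p J. \<forall>j. j \<noteq> i \<longrightarrow> (E' *v axis i 1) \<bullet> (A *v (E' *v axis j 1)) = 0)
    \<and> (\<forall>q\<in>insert p J. E' *v axis q 1 = E *v axis q 1)"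
proof -
  define b where "b i j = (E *v axis i 1) \<bullet> (A *v (E *v axis j 1))" for i j
  have bsym: "b i j = b j i" for i j
    unfolding b_def by (rule sym_bf[OF sym])
  have Ep: "E *v axis p 1 \<noteq> 0"
  proof
    assume "E *v axis p 1 = 0"
    then have "axis p (1::real) = 0" using det_nz_ker[of E "axis p 1"] E(2) by simp
    then show False by (simp add: axis_eq_0_iff)
  qed
  have bpp: "b p p > 0" using pd Ep unfolding b_def by blast
  define c where "c = (\<chi> j. if j = p then 0 else b p j / b p p)"
  have cp: "c $ p = 0" by (simp add: c_def)
  have cJ: "c $ q = 0" if "q \<in> J" for q
  proof -
    have "q \<noteq> p" using that p by auto
    then have "b q p = 0" using hJ that unfolding b_def by auto
    then show ?thesis using \<open>q \<noteq> p\<close> bsym[of p q] by (simp add: c_def)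
  qed
  define E' where "E' = E ** shear p c"
  have E'ax: "E' *v axis j 1 = E *v axis j 1 - c$j *\<^sub>R (E *v axis p 1)" for j
  proof -
    have "E' *v axis j 1 = E *v (shear p c *v axis j 1)"
      by (simp add: E'_def matrix_vector_mul_assoc)
    also have "shear p c *v axis j 1 = axis j 1 - (c$j) *\<^sub>R axis p 1"
      by (simp add: shear_mult inner_axis)
    finally show ?thesis
      by (simp add: matrix_vector_mult_diff_distrib matrix_vector_mult_scaleR)
  qed
  have b': "(E' *v axis i 1) \<bullet> (A *v (E' *v axis j 1)) = b i j - c$j * b i p - c$i * b p j + c$i * c$j * b p p" for i j
    by (simp add: E'ax b_def matrix_vector_mult_diff_distrib matrix_vector_mult_scaleR inner_diff_left inner_diff_right algebra_simps)
  have "lb_inv E'" unfolding E'_def by (intro lb_inv_mult E(1) lb_inv_shear cp)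
  moreover have "det E' = 1" unfolding E'_def using E(2) det_shear[OF cp] by (simp add: det_mul)
  moreover have "\<forall>i\<in>insert p J. \<forall>j. j \<noteq> i \<longrightarrow> (E' *v axis i 1) \<bullet> (A *v (E' *v axis j 1)) = 0"
  proof (intro ballI allI impI)
    fix i j assume i: "i \<in> insert p J" and ji: "j \<noteq> i"
    show "(E' *v axis i 1) \<bullet> (A *v (E' *v axis j 1)) = 0"
    proof (cases "i = p")
      case True
      then show ?thesis using ji bpp by (simp add: b' cp c_def)
    next
      case False
      then have iJ: "i \<in> J" using i by auto
      have "b i j = 0" "b i p = 0" using hJ iJ ji False unfolding b_def by auto
      then show ?thesis by (simp add: b' cJ[OF iJ])
    qed
  qed
  moreover have "\<forall>q\<in>insert p J. E' *v axis q 1 = E *v axis q 1"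
    using cp cJ by (auto simp: E'ax)
  ultimately show ?thesis by blast
qed

lemma diag_exists:
  fixes A :: "real^'n::finite^'n"
  assumes sym: "transpose A = A" and pd: "\<forall>x. x \<noteq> 0 \<longrightarrow> 0 < x \<bullet> (A *v x)"
  shows "\<exists>E. lb_inv E \<and> det E = 1 \<and> E *v axis k 1 = axis k 1
    \<and> (\<forall>i j. j \<noteq> i \<longrightarrow> (E *v axis i 1) \<bullet> (A *v (E *v axis j 1)) = 0)"
proof -
  obtain E1 where E1: "lb_inv E1" "det E1 = 1"
    "\<forall>i\<in>{k}. \<forall>j. j \<noteq> i \<longrightarrow> (E1 *v axis i 1) \<bullet> (A *v (E1 *v axis j 1)) = 0"
    "E1 *v axis k 1 = axis k 1"
    using diag_step[OF sym pd lb_inv_I det_I, of "{}" k] by auto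
  have "finite J \<Longrightarrow> \<exists>E. lb_inv E \<and> det E = 1 \<and> E *v axis k 1 = axis k 1
    \<and> (\<forall>i\<in>insert k J. \<forall>j. j \<noteq> i \<longrightarrow> (E *v axis i 1) \<bullet> (A *v (E *v axis j 1)) = 0)" for J
  proof (induction J rule: finite_induct)
    case empty
    then show ?case using E1 by auto
  next
    case (insert p J)
    then obtain E where E: "lb_inv E" "det E = 1" "E *v axis k 1 = axis k 1"
      "\<forall>i\<in>insert k J. \<forall>j. j \<noteq> i \<longrightarrow> (E *v axis i 1) \<bullet> (A *v (E *v axis j 1)) = 0"
      by blast
    show ?case
    proof (cases "p = k")
      case True
      then show ?thesis using E by (metis insert_absorb2 insert_commute)
    next
      case False
      then have "p \<notin> insert k J" using insert by auto
      from diag_step[OF sym pd E(1,2) E(4) this] obtain E' where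
        "lb_inv E'" "det E' = 1"
        "\<forall>i\<in>insert p (insert k J). \<forall>j. j \<noteq> i \<longrightarrow> (E' *v axis i 1) \<bullet> (A *v (E' *v axis j 1)) = 0"
        "\<forall>q\<in>insert p (insert k J). E' *v axis q 1 = E *v axis q 1"
        by blast
      then show ?thesis using E(3) by (intro exI[of _ E']) (auto simp: insert_commute)
    qed
  qed
  from this[of UNIV] show ?thesis by auto
qed
definition O1 :: "real \<Rightarrow> ennreal" where
  "O1 a = (\<integral>\<^sup>+u. ennreal (min (std_normal_density u) (std_normal_density (u + a))) \<partial>lborel)"

lemma O1_sym: "O1 (- a) = O1 a"
proof -
  have "O1 a = ennreal \<bar>1\<bar> * (\<integral>\<^sup>+x. ennreal (min (std_normal_density (- a + 1 * x)) (std_normal_density (- a + 1 * x + a))) \<partial>lborel)"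
    unfolding O1_def by (rule nn_integral_real_affine) auto
  also have "\<dots> = O1 (- a)"
    unfolding O1_def by (auto intro!: nn_integral_cong simp: min.commute)
  finally show ?thesis by simp
qed

lemma std_normal_cdf_nn:
  "(\<integral>\<^sup>+u. ennreal (std_normal_density u) * indicator {..t} u \<partial>lborel) = ennreal (std_normal_cdf t)"
proof -
  interpret prob_space "density lborel std_normal_density"
    by (rule prob_space_normal_density) simp
  have "(\<integral>\<^sup>+u. ennreal (std_normal_density u) * indicator {..t} u \<partial>lborel) = emeasure (density lborel std_normal_density) {..t}"
    by (subst emeasure_density) (auto simp: mult.commute)
  also have "\<dots> = ennreal (std_normal_cdf t)"
    by (simp add: std_normal_cdf_def emeasure_eq_measure)
  finally show ?thesis .
qed

lemma O1_0: "O1 0 = 1"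
proof -
  interpret prob_space "density lborel std_normal_density"
    by (rule prob_space_normal_density) simp
  have "O1 0 = emeasure (density lborel std_normal_density) UNIV"
    unfolding O1_def by (subst emeasure_density) auto
  also have "\<dots> = 1" using emeasure_space_1 by simp
  finally show ?thesis .
qed

lemma psi_le: "x\<^sup>2 \<le> y\<^sup>2 \<Longrightarrow> std_normal_density y \<le> std_normal_density x"
  unfolding std_normal_density_def by (simp add: divide_right_mono)

lemma O1_pos:
  assumes a: "0 \<le> a"
  shows "O1 a = ennreal (2 * std_normal_cdf (- a / 2))"
proof -
  let ?\<psi> = "std_normal_density"
  have split: "ennreal (min (?\<psi> u) (?\<psi> (u + a))) =
      ennreal (?\<psi> u) * indicator {..- a / 2} u + ennreal (?\<psi> (u + a)) * indicator {- a / 2<..} u" for u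
  proof (cases "u \<le> - a / 2")
    case True
    have "(u + a)\<^sup>2 \<le> u\<^sup>2"
    proof -
      have "(u + a)\<^sup>2 - u\<^sup>2 = a * (2 * u + a)" by (simp add: power2_eq_square algebra_simps)
      also have "\<dots> \<le> 0" using True a by (intro mult_nonneg_nonpos) auto
      finally show ?thesis by simp
    qed
    then have "?\<psi> u \<le> ?\<psi> (u + a)" by (rule psi_le)
    then show ?thesis using True by (simp add: min_def)
  next
    case False
    have "u\<^sup>2 \<le> (u + a)\<^sup>2"
    proof -
      have "(u + a)\<^sup>2 - u\<^sup>2 = a * (2 * u + a)" by (simp add: power2_eq_square algebra_simps)
      also have "\<dots> \<ge> 0" using False a by (intro mult_nonneg_nonneg) auto
      finally show ?thesis by simp
    qed
    then have "?\<psi> (u + a) \<le> ?\<psi> u" by (rule psi_le)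
    then show ?thesis using False by (simp add: min_def)
  qed
  have I1: "(\<integral>\<^sup>+u. ennreal (?\<psi> u) * indicator {..- a / 2} u \<partial>lborel) = ennreal (std_normal_cdf (- a / 2))"
    by (rule std_normal_cdf_nn)
  have "(\<integral>\<^sup>+u. ennreal (?\<psi> (u + a)) * indicator {- a / 2<..} u \<partial>lborel)
      = ennreal \<bar>1\<bar> * (\<integral>\<^sup>+x. ennreal (?\<psi> (- a + 1 * x + a)) * indicator {- a / 2<..} (- a + 1 * x) \<partial>lborel)"
    by (rule nn_integral_real_affine) auto
  also have "\<dots> = (\<integral>\<^sup>+x. ennreal (?\<psi> x) * indicator {a / 2<..} x \<partial>lborel)"
    by (auto intro!: nn_integral_cong simp: indicator_def)
  also have "\<dots> = ennreal \<bar>-1\<bar> * (\<integral>\<^sup>+x. ennreal (?\<psi> (0 + -1 * x)) * indicator {a / 2<..} (0 + -1 * x) \<partial>lborel)"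
    by (rule nn_integral_real_affine) auto
  also have "\<dots> = (\<integral>\<^sup>+x. ennreal (?\<psi> x) * indicator {..<- a / 2} x \<partial>lborel)"
    by (auto intro!: nn_integral_cong simp: indicator_def normal_density_def)
  also have "\<dots> = (\<integral>\<^sup>+x. ennreal (?\<psi> x) * indicator {..- a / 2} x \<partial>lborel)"
    by (intro nn_integral_cong_AE, use AE_lborel_singleton[of "- a / 2"] in eventually_elim) (auto simp: indicator_def)
  finally have I2: "(\<integral>\<^sup>+u. ennreal (?\<psi> (u + a)) * indicator {- a / 2<..} u \<partial>lborel) = ennreal (std_normal_cdf (- a / 2))"
    using std_normal_cdf_nn by simp
  have "O1 a = (\<integral>\<^sup>+u. ennreal (?\<psi> u) * indicator {..- a / 2} u + ennreal (?\<psi> (u + a)) * indicator {- a / 2<..} u \<partial>lborel)"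
    unfolding O1_def by (simp add: split)
  also have "\<dots> = (\<integral>\<^sup>+u. ennreal (?\<psi> u) * indicator {..- a / 2} u \<partial>lborel) + (\<integral>\<^sup>+u. ennreal (?\<psi> (u + a)) * indicator {- a / 2<..} u \<partial>lborel)"
    by (rule nn_integral_add) auto
  also have "\<dots> = ennreal (2 * std_normal_cdf (- a / 2))"
    using I1 I2 by (simp add: ennreal_plus[symmetric] measure_nonneg std_normal_cdf_def del: ennreal_plus)
  finally show ?thesis .
qed
lemma min_scale_aux:
  fixes c a b :: real
  assumes "0 < c"
  shows "min a b = c * min (1 / c * a) (1 / c * b)"
  using assms by (cases "a \<le> b") (auto simp: min_def divide_right_mono divide_le_cancel)

lemma L1D:
  fixes d t :: real
  assumes d: "0 < d"
  shows "(\<integral>\<^sup>+s. ennreal (min (exp (- (d * s\<^sup>2) / 2)) (exp (- (d * (s + t)\<^sup>2) / 2))) \<partial>lborel)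
    = ennreal (sqrt (2 * pi) / sqrt d) * O1 (sqrt d * t)"
proof -
  let ?c = "1 / sqrt d"
  have c0: "?c \<noteq> 0" using d by simp
  have "(\<integral>\<^sup>+s. ennreal (min (exp (- (d * s\<^sup>2) / 2)) (exp (- (d * (s + t)\<^sup>2) / 2))) \<partial>lborel)
    = ennreal \<bar>?c\<bar> * (\<integral>\<^sup>+x. ennreal (min (exp (- (d * (0 + ?c * x)\<^sup>2) / 2)) (exp (- (d * (0 + ?c * x + t)\<^sup>2) / 2))) \<partial>lborel)"
    by (rule nn_integral_real_affine[OF _ c0]) auto
  also have "(\<lambda>x. ennreal (min (exp (- (d * (0 + ?c * x)\<^sup>2) / 2)) (exp (- (d * (0 + ?c * x + t)\<^sup>2) / 2))))
      = (\<lambda>x. ennreal (sqrt (2 * pi)) * ennreal (min (std_normal_density x) (std_normal_density (x + sqrt d * t))))"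
  proof
    fix x
    have e1: "d * (x / sqrt d)\<^sup>2 = x\<^sup>2" using d by (simp add: power_divide)
    have e2: "d * (x / sqrt d + t)\<^sup>2 = (x + sqrt d * t)\<^sup>2"
    proof -
      have "x / sqrt d + t = (x + sqrt d * t) / sqrt d" using d by (simp add: field_simps)
      then show ?thesis using d by (simp add: power_divide)
    qed
    have "min (exp (- x\<^sup>2 / 2)) (exp (- (x + sqrt d * t)\<^sup>2 / 2))
        = sqrt (2 * pi) * min (std_normal_density x) (std_normal_density (x + sqrt d * t))"
      unfolding std_normal_density_def by (rule min_scale_aux) simp
    then show "ennreal (min (exp (- (d * (0 + ?c * x)\<^sup>2) / 2)) (exp (- (d * (0 + ?c * x + t)\<^sup>2) / 2)))
      = ennreal (sqrt (2 * pi)) * ennreal (min (std_normal_density x) (std_normal_density (x + sqrt d * t)))"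
      by (simp add: e1 e2 ennreal_mult[symmetric] del: ennreal_mult)
  qed
  also have "(\<integral>\<^sup>+x. ennreal (sqrt (2 * pi)) * ennreal (min (std_normal_density x) (std_normal_density (x + sqrt d * t))) \<partial>lborel)
      = ennreal (sqrt (2 * pi)) * O1 (sqrt d * t)"
    unfolding O1_def by (rule nn_integral_cmult) measurable
  also have "ennreal \<bar>?c\<bar> * (ennreal (sqrt (2 * pi)) * O1 (sqrt d * t)) = ennreal (sqrt (2 * pi) / sqrt d) * O1 (sqrt d * t)"
    using d by (simp add: mult.assoc[symmetric] ennreal_mult[symmetric] del: ennreal_mult)
  finally show ?thesis .
qed
lemma congr_form:
  fixes E A :: "real^'n::finite^'n"
  shows "x \<bullet> ((transpose E ** A ** E) *v y) = (E *v x) \<bullet> (A *v (E *v y))"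
proof -
  have "(transpose E ** A ** E) *v y = transpose E *v (A *v (E *v y))"
    by (simp add: matrix_vector_mul_assoc matrix_mul_assoc)
  then have "x \<bullet> ((transpose E ** A ** E) *v y) = x \<bullet> ((A *v (E *v y)) v* E)"
    by simp
  also have "\<dots> = ((A *v (E *v y)) v* E) \<bullet> x" by (simp add: inner_commute)
  also have "\<dots> = (A *v (E *v y)) \<bullet> (E *v x)" by (simp add: dot_lmul_matrix)
  finally show ?thesis by (simp add: inner_commute)
qed

lemma mat_entry_inner:
  fixes B :: "real^'n::finite^'n"
  shows "B $ i $ j = axis i 1 \<bullet> (B *v axis j 1)"
proof -
  have "(B *v axis j 1) $ i = B $ i $ j"
    by (simp add: matrix_vector_mult_def axis_def if_distrib[of "\<lambda>a. _ * a"] sum.delta' cong: if_cong)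
  then show ?thesis by (simp add: inner_axis')
qed

lemma diag_quad:
  fixes E A :: "real^'n::finite^'n"
  assumes off: "\<forall>i j. j \<noteq> i \<longrightarrow> (E *v axis i 1) \<bullet> (A *v (E *v axis j 1)) = 0"
  shows "(E *v z) \<bullet> (A *v (E *v z)) = (\<Sum>i\<in>UNIV. (E *v axis i 1) \<bullet> (A *v (E *v axis i 1)) * (z$i)\<^sup>2)"
proof -
  let ?B = "transpose E ** A ** E"
  have Bij: "?B $ i $ j = (E *v axis i 1) \<bullet> (A *v (E *v axis j 1))" for i j
    by (simp add: mat_entry_inner congr_form)
  have "(E *v z) \<bullet> (A *v (E *v z)) = z \<bullet> (?B *v z)" by (simp add: congr_form)
  also have "\<dots> = (\<Sum>i\<in>UNIV. z $ i * (\<Sum>j\<in>UNIV. ?B $ i $ j * z $ j))"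
    by (simp add: inner_vec_def matrix_vector_mult_def)
  also have "\<dots> = (\<Sum>i\<in>UNIV. z $ i * (?B $ i $ i * z $ i))"
  proof (rule sum.cong[OF refl])
    fix i
    have "(\<Sum>j\<in>UNIV. ?B $ i $ j * z $ j) = (\<Sum>j\<in>UNIV. if j = i then ?B $ i $ i * z $ i else 0)"
      by (rule sum.cong) (auto simp: Bij off)
    then show "z $ i * (\<Sum>j\<in>UNIV. ?B $ i $ j * z $ j) = z $ i * (?B $ i $ i * z $ i)"
      by simp
  qed
  also have "\<dots> = (\<Sum>i\<in>UNIV. (E *v axis i 1) \<bullet> (A *v (E *v axis i 1)) * (z$i)\<^sup>2)"
    by (simp add: Bij power2_eq_square algebra_simps)
  finally show ?thesis .
qed

lemma diag_det:
  fixes E A :: "real^'n::finite^'n"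
  assumes off: "\<forall>i j. j \<noteq> i \<longrightarrow> (E *v axis i 1) \<bullet> (A *v (E *v axis j 1)) = 0"
    and dE: "det E = 1"
  shows "det A = (\<Prod>i\<in>UNIV. (E *v axis i 1) \<bullet> (A *v (E *v axis i 1)))"
proof -
  let ?B = "transpose E ** A ** E"
  have Bij: "?B $ i $ j = (E *v axis i 1) \<bullet> (A *v (E *v axis j 1))" for i j
    by (simp add: mat_entry_inner congr_form)
  have "det ?B = det A" using dE by (simp add: det_mul)
  moreover have "det ?B = (\<Prod>i\<in>UNIV. ?B $ i $ i)"
    by (rule det_diagonal) (simp add: Bij off)
  ultimately show ?thesis by (simp add: Bij)
qed

lemma nn_integral_vec_prod:
  fixes F :: "'n::finite \<Rightarrow> real \<Rightarrow> ennreal"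
  assumes F: "\<And>i. F i \<in> borel_measurable borel"
  shows "(\<integral>\<^sup>+z. (\<Prod>i\<in>UNIV. F i (z$i)) \<partial>lborel) = (\<Prod>i\<in>UNIV. \<integral>\<^sup>+s. F i s \<partial>lborel)"
proof -
  define f where "f b = F (SOME i. b = axis i 1)" for b :: "real^'n"
  have fax: "f (axis i 1) = F i" for i
    unfolding f_def by (rule arg_cong[where f=F]) (auto simp: axis_eq_axis)
  have B: "(Basis :: (real^'n) set) = (\<lambda>i. axis i 1) ` UNIV"
    by (auto simp: Basis_vec_def)
  have inj: "inj (\<lambda>i::'n. axis i (1::real))"
    by (auto simp: inj_def axis_eq_axis)
  have "(\<integral>\<^sup>+z. (\<Prod>b\<in>Basis. f b (z \<bullet> b)) \<partial>lborel) = (\<Prod>b\<in>Basis. \<integral>\<^sup>+s. f b s \<partial>lborel)"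
    by (rule nn_integral_lborel_prod) (auto simp: B fax F)
  moreover have "(\<Prod>b\<in>Basis. f b (z \<bullet> b)) = (\<Prod>i\<in>UNIV. F i (z$i))" for z :: "real^'n"
    by (simp add: B prod.reindex[OF inj] fax inner_axis)
  moreover have "(\<Prod>b\<in>Basis. \<integral>\<^sup>+s. f b s \<partial>lborel) = (\<Prod>i\<in>UNIV. \<integral>\<^sup>+s. F i s \<partial>lborel)"
    by (simp add: B prod.reindex[OF inj] fax)
  ultimately show ?thesis by simp
qed

lemma align_exists:
  fixes w :: "real^'n::finite"
  assumes wk: "w $ k = 1"
  shows "\<exists>G. lb_inv G \<and> det G = 1 \<and> G *v axis k 1 = w"
proof -
  have "finite J \<Longrightarrow> k \<notin> J \<Longrightarrow> \<exists>G. lb_inv G \<and> det G = 1 \<and> G *v axis k 1 = axis k 1 + (\<Sum>j\<in>J. w$j *\<^sub>R axis j 1)" for J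
  proof (induction J rule: finite_induct)
    case empty
    show ?case by (intro exI[of _ "mat 1"]) (simp add: lb_inv_I)
  next
    case (insert j J)
    then obtain G where G: "lb_inv G" "det G = 1" "G *v axis k 1 = axis k 1 + (\<Sum>j\<in>J. w$j *\<^sub>R axis j 1)"
      by auto
    have jk: "j \<noteq> k" using insert by auto
    define c where "c = (- (w$j)) *\<^sub>R axis k (1::real)"
    have cj: "c $ j = 0" using jk by (simp add: c_def axis_def)
    have yk: "(G *v axis k 1) $ k = 1"
    proof -
      have "(\<Sum>x\<in>J. w $ x * (if k = x then 1 else 0)) = 0"
        using insert(4) by (intro sum.neutral) auto
      then show ?thesis using insert(4) unfolding G(3) by (simp add: sum_component axis_def)
    qed
    have "(shear j c ** G) *v axis k 1 = G *v axis k 1 + w$j *\<^sub>R axis j 1"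
    proof -
      have "(shear j c ** G) *v axis k 1 = shear j c *v (G *v axis k 1)"
        by (simp add: matrix_vector_mul_assoc)
      also have "\<dots> = G *v axis k 1 - (c \<bullet> (G *v axis k 1)) *\<^sub>R axis j 1"
        by (rule shear_mult)
      also have "c \<bullet> (G *v axis k 1) = - (w$j)"
        using yk by (simp add: c_def inner_axis')
      finally show ?thesis by simp
    qed
    then have "(shear j c ** G) *v axis k 1 = axis k 1 + (\<Sum>j\<in>insert j J. w$j *\<^sub>R axis j 1)"
      using insert(1,2) by (simp add: G(3) algebra_simps)
    moreover have "lb_inv (shear j c ** G)" by (intro lb_inv_mult lb_inv_shear cj G(1))
    moreover have "det (shear j c ** G) = 1" using G(2) det_shear[OF cj] by (simp add: det_mul)
    ultimately show ?case by blast
  qed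
  from this[of "UNIV - {k}"] obtain G where G: "lb_inv G" "det G = 1"
      "G *v axis k 1 = axis k 1 + (\<Sum>j\<in>UNIV - {k}. w$j *\<^sub>R axis j 1)"
    by auto
  have "axis k 1 + (\<Sum>j\<in>UNIV - {k}. w$j *\<^sub>R axis j 1) = w"
  proof -
    have "(axis k 1 + (\<Sum>j\<in>UNIV - {k}. w$j *\<^sub>R axis j 1)) $ i = w $ i" for i
    proof -
      have "(\<Sum>j\<in>UNIV - {k}. (w$j *\<^sub>R axis j (1::real)) $ i) = (\<Sum>j\<in>UNIV - {k}. if j = i then w $ j else 0)"
        by (rule sum.cong) (auto simp: axis_def)
      then show ?thesis using wk by (auto simp: sum_component axis_def sum.delta')
    qed
    then show ?thesis by (simp add: vec_eq_iff)
  qed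
  with G show ?thesis by auto
qed
lemma matrix_inv_props:
  fixes A :: "real^'n::finite^'n"
  assumes "invertible A"
  shows "A ** matrix_inv A = mat 1" "matrix_inv A ** A = mat 1"
proof -
  have "\<exists>A'. A ** A' = mat 1 \<and> A' ** A = mat 1" using assms by (simp add: invertible_def)
  then have "A ** matrix_inv A = mat 1 \<and> matrix_inv A ** A = mat 1"
    unfolding matrix_inv_def by (rule someI_ex)
  then show "A ** matrix_inv A = mat 1" "matrix_inv A ** A = mat 1" by auto
qed

lemma pd_invertible:
  fixes A :: "real^'n::finite^'n"
  assumes pd: "\<forall>x. x \<noteq> 0 \<longrightarrow> 0 < x \<bullet> (A *v x)"
  shows "invertible A"
proof -
  have "\<forall>x. A *v x = 0 \<longrightarrow> x = 0"
  proof (intro allI impI)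
    fix x assume "A *v x = 0"
    then have "x \<bullet> (A *v x) = 0" by simp
    then show "x = 0" using pd by (metis less_irrefl)
  qed
  then show ?thesis
    using matrix_left_invertible_ker invertible_left_inverse by blast
qed

lemma pd_inv_facts:
  fixes A :: "real^'n::finite^'n"
  assumes sym: "transpose A = A" and pd: "\<forall>x. x \<noteq> 0 \<longrightarrow> 0 < x \<bullet> (A *v x)"
  shows "A ** matrix_inv A = mat 1" "matrix_inv A ** A = mat 1"
    "transpose (matrix_inv A) = matrix_inv A"
    "\<forall>x. x \<noteq> 0 \<longrightarrow> 0 < x \<bullet> (matrix_inv A *v x)"
    "det A * det (matrix_inv A) = 1"
proof -
  have inv: "invertible A" by (rule pd_invertible[OF pd])
  note M = matrix_inv_props[OF inv]
  show M1: "A ** matrix_inv A = mat 1" "matrix_inv A ** A = mat 1" by (fact M)+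
  have "transpose (matrix_inv A) ** A = mat 1"
  proof -
    have "transpose (A ** matrix_inv A) = mat 1" using M(1) by (simp add: transpose_mat)
    then show ?thesis by (simp add: matrix_transpose_mul sym)
  qed
  then have "transpose (matrix_inv A) = transpose (matrix_inv A) ** (A ** matrix_inv A)"
    using M(1) by simp
  also have "\<dots> = (transpose (matrix_inv A) ** A) ** matrix_inv A" by (simp add: matrix_mul_assoc)
  also have "\<dots> = matrix_inv A" using \<open>transpose (matrix_inv A) ** A = mat 1\<close> by simp
  finally show "transpose (matrix_inv A) = matrix_inv A" .
  show "\<forall>x. x \<noteq> 0 \<longrightarrow> 0 < x \<bullet> (matrix_inv A *v x)"
  proof (intro allI impI)
    fix x :: "real^'n" assume x: "x \<noteq> 0"
    let ?y = "matrix_inv A *v x"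
    have xy: "A *v ?y = x" using M(1) by (simp add: matrix_vector_mul_assoc)
    have "?y \<noteq> 0" using x xy by auto
    then have "0 < ?y \<bullet> (A *v ?y)" using pd by blast
    then show "0 < x \<bullet> ?y" using xy by (simp add: inner_commute)
  qed
  show "det A * det (matrix_inv A) = 1" using M(1) by (metis det_I det_mul)
qed
lemma gd_measurable:
  fixes S :: "real^'n::finite^'n"
  shows "(\<lambda>w. gauss_density S w) \<in> borel_measurable borel"
proof -
  let ?c = "1 / sqrt ((2 * pi) ^ CARD('n) * det S)"
  have eq: "(\<lambda>w. gauss_density S w) = (\<lambda>w::real^'n. exp (- (w \<bullet> (matrix_inv S *v w)) * (1/2)) * ?c)"
    by (simp add: gauss_density_def[abs_def])
  have "continuous_on UNIV (\<lambda>w::real^'n. exp (- (w \<bullet> (matrix_inv S *v w)) * (1/2)) * ?c)"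
    by (intro continuous_intros linear_continuous_on matrix_vector_mul_bounded_linear)
  then show ?thesis unfolding eq by (rule borel_measurable_continuous_onI)
qed

lemma exp_split_k:
  fixes y :: "real^'n::finite"
  shows "exp (- (\<Sum>i\<in>UNIV. d i * (y$i)\<^sup>2) / 2) = exp (- (d k * (y$k)\<^sup>2) / 2) * (\<Prod>i\<in>UNIV-{k}. exp (- (d i * (y$i)\<^sup>2) / 2))"
proof -
  have "- (\<Sum>i\<in>UNIV. d i * (y$i)\<^sup>2) / 2 = (\<Sum>i\<in>UNIV. - (d i * (y$i)\<^sup>2) / 2)"
    by (simp add: sum_negf sum_divide_distrib)
  then have "exp (- (\<Sum>i\<in>UNIV. d i * (y$i)\<^sup>2) / 2) = (\<Prod>i\<in>UNIV. exp (- (d i * (y$i)\<^sup>2) / 2))"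
    by (simp add: exp_sum)
  also have "\<dots> = exp (- (d k * (y$k)\<^sup>2) / 2) * (\<Prod>i\<in>UNIV-{k}. exp (- (d i * (y$i)\<^sup>2) / 2))"
    by (subst prod.remove[of _ k]) auto
  finally show ?thesis .
qed
lemma gd_measurable'[measurable]:
  fixes S :: "real^'n::finite^'n"
  shows "gauss_density S \<in> borel_measurable borel"
  using gd_measurable[of S] by simp

lemma sqrt_prod: "sqrt (prod f A) = (\<Prod>i\<in>A. sqrt (f i))"
  by (induction A rule: infinite_finite_induct) (auto simp: real_sqrt_mult)

lemma min_mult_nonneg:
  fixes a b c :: real
  assumes "0 \<le> c"
  shows "min (a * c) (b * c) = min a b * c"
  using assms by (simp add: min_mult_distrib_right)

lemma gauss_overlap:
  fixes S :: "real^'n::finite^'n" and \<gamma> :: "real^'n"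
  assumes S: "pos_def S"
  shows "(\<integral>\<^sup>+w. ennreal (min (gauss_density S w) (gauss_density S (w + \<gamma>))) \<partial>lborel)
    = O1 (sqrt (\<gamma> \<bullet> (matrix_inv S *v \<gamma>)))"
proof -
  define M where "M = matrix_inv S"
  have Ssym: "transpose S = S" and Spd: "\<forall>x. x \<noteq> 0 \<longrightarrow> 0 < x \<bullet> (S *v x)"
    using S by (auto simp: pos_def_def)
  note FF = pd_inv_facts[OF Ssym Spd]
  have Msym: "transpose M = M" and Mpd: "\<forall>x. x \<noteq> 0 \<longrightarrow> 0 < x \<bullet> (M *v x)"
    and detSM: "det S * det M = 1"
    using FF by (auto simp: M_def)
  obtain k t G where G: "lb_inv G" "det G = 1" "t *\<^sub>R (G *v axis k 1) = \<gamma>"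
  proof (cases "\<gamma> = 0")
    case True
    then show ?thesis using that[of "mat 1" 0 undefined] by (simp add: lb_inv_I)
  next
    case False
    then obtain k where k: "\<gamma> $ k \<noteq> 0" by (auto simp: vec_eq_iff)
    have "((1 / \<gamma>$k) *\<^sub>R \<gamma>) $ k = 1" using k by simp
    from align_exists[OF this] obtain G where "lb_inv G" "det G = 1" "G *v axis k 1 = (1 / \<gamma>$k) *\<^sub>R \<gamma>"
      by blast
    moreover have "(\<gamma>$k) *\<^sub>R ((1 / \<gamma>$k) *\<^sub>R \<gamma>) = \<gamma>" using k by simp
    ultimately show ?thesis using that[of G "\<gamma>$k" k] by simp
  qed
  define A' where "A' = transpose G ** M ** G"
  have A'sym: "transpose A' = A'"
    by (simp add: A'_def matrix_transpose_mul Msym matrix_mul_assoc)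
  have A'form: "x \<bullet> (A' *v y) = (G *v x) \<bullet> (M *v (G *v y))" for x y
    unfolding A'_def by (rule congr_form)
  have A'pd: "\<forall>x. x \<noteq> 0 \<longrightarrow> 0 < x \<bullet> (A' *v x)"
  proof (intro allI impI)
    fix x :: "real^'n" assume "x \<noteq> 0"
    then have "G *v x \<noteq> 0" using det_nz_ker[of G x] G(2) by auto
    then show "0 < x \<bullet> (A' *v x)" using Mpd by (simp add: A'form)
  qed
  obtain E where E: "lb_inv E" "det E = 1" "E *v axis k 1 = axis k 1"
    "\<forall>i j. j \<noteq> i \<longrightarrow> (E *v axis i 1) \<bullet> (A' *v (E *v axis j 1)) = 0"
    using diag_exists[OF A'sym A'pd, of k] by blast
  define T where "T = G ** E"
  have Tinv: "lb_inv T" unfolding T_def by (rule lb_inv_mult[OF G(1) E(1)])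
  define d where "d i = (E *v axis i 1) \<bullet> (A' *v (E *v axis i 1))" for i
  have dpos: "0 < d i" for i
  proof -
    have "E *v axis i 1 \<noteq> 0" using det_nz_ker[of E "axis i 1"] E(2) by (auto simp: axis_eq_0_iff)
    then show ?thesis using A'pd unfolding d_def by blast
  qed
  have quad: "(T *v z) \<bullet> (M *v (T *v z)) = (\<Sum>i\<in>UNIV. d i * (z$i)\<^sup>2)" for z
  proof -
    have "(E *v z) \<bullet> (A' *v (E *v z)) = (G *v (E *v z)) \<bullet> (M *v (G *v (E *v z)))" by (rule A'form)
    moreover have "G *v (E *v z) = T *v z" by (simp add: T_def matrix_vector_mul_assoc)
    ultimately have "(T *v z) \<bullet> (M *v (T *v z)) = (E *v z) \<bullet> (A' *v (E *v z))" by simp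
    also have "\<dots> = (\<Sum>i\<in>UNIV. d i * (z$i)\<^sup>2)" unfolding d_def by (rule diag_quad[OF E(4)])
    finally show ?thesis .
  qed
  have detM: "det M = (\<Prod>i\<in>UNIV. d i)"
  proof -
    have "det A' = det M" using G(2) by (simp add: A'_def det_mul)
    then show ?thesis using diag_det[OF E(4) E(2)] by (simp add: d_def)
  qed
  have shift: "T *v (z + t *\<^sub>R axis k 1) = T *v z + \<gamma>" for z
  proof -
    have "T *v (t *\<^sub>R axis k 1) = t *\<^sub>R (G *v (E *v axis k 1))"
      by (simp add: T_def matrix_vector_mul_assoc[symmetric] matrix_vector_mult_scaleR)
    then show ?thesis using G(3) E(3) by (simp add: matrix_vector_right_distrib)
  qed
  have gM: "\<gamma> \<bullet> (M *v \<gamma>) = d k * t\<^sup>2"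
  proof -
    have "\<gamma> = T *v (t *\<^sub>R axis k 1)" using shift[of 0] by simp
    then have "\<gamma> \<bullet> (M *v \<gamma>) = (\<Sum>i\<in>UNIV. d i * ((t *\<^sub>R axis k 1)$i)\<^sup>2)" using quad by simp
    also have "\<dots> = (\<Sum>i\<in>UNIV. if i = k then d k * t\<^sup>2 else 0)" by (rule sum.cong) (auto simp: axis_def)
    also have "\<dots> = d k * t\<^sup>2" by simp
    finally show ?thesis .
  qed
  have prodd: "0 < (\<Prod>i\<in>UNIV. d i)" using dpos by (simp add: prod_pos)
  have detS: "det S = 1 / (\<Prod>i\<in>UNIV. d i)"
  proof -
    have "det S * (\<Prod>i\<in>UNIV. d i) = 1" using detSM detM by simp
    then show ?thesis using prodd by (metis nonzero_eq_divide_eq less_irrefl)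
  qed
  define Z where "Z = sqrt ((2 * pi) ^ CARD('n) * det S)"
  have Zpos: "0 < Z" unfolding Z_def using detS prodd by simp
  have gdT: "gauss_density S (T *v y) = exp (- (\<Sum>i\<in>UNIV. d i * (y$i)\<^sup>2) / 2) / Z" for y
    by (simp add: gauss_density_def quad[symmetric] M_def Z_def)
  define q where "q i s = exp (- (d i * s\<^sup>2) / 2)" for i s
  define m where "m s = min (q k s) (q k (s + t))" for s
  define F where "F i s = ennreal (if i = k then m s else q i s)" for i s
  have pw: "ennreal (min (gauss_density S (T *v z)) (gauss_density S (T *v z + \<gamma>)))
      = ennreal (1 / Z) * (\<Prod>i\<in>UNIV. F i (z$i))" for z
  proof -
    let ?P = "\<Prod>i\<in>UNIV-{k}. q i (z$i)"
    have P0: "0 \<le> ?P" by (simp add: q_def prod_nonneg)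
    have e1: "gauss_density S (T *v z) = q k (z$k) * (?P / Z)"
      using exp_split_k[of d z k] by (simp add: gdT q_def)
    have e2: "gauss_density S (T *v z + \<gamma>) = q k (z$k + t) * (?P / Z)"
    proof -
      have "gauss_density S (T *v z + \<gamma>) = gauss_density S (T *v (z + t *\<^sub>R axis k 1))" by (simp add: shift)
      also have "\<dots> = exp (- (d k * ((z + t *\<^sub>R axis k 1)$k)\<^sup>2) / 2) * (\<Prod>i\<in>UNIV-{k}. exp (- (d i * ((z + t *\<^sub>R axis k 1)$i)\<^sup>2) / 2)) / Z"
        using exp_split_k[of d "z + t *\<^sub>R axis k 1" k] by (simp add: gdT)
      also have "(\<Prod>i\<in>UNIV-{k}. exp (- (d i * ((z + t *\<^sub>R axis k 1)$i)\<^sup>2) / 2)) = ?P"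
        by (rule prod.cong) (auto simp: q_def axis_def)
      finally show ?thesis by (simp add: q_def axis_def)
    qed
    have "min (gauss_density S (T *v z)) (gauss_density S (T *v z + \<gamma>)) = m (z$k) * (?P / Z)"
      unfolding e1 e2 m_def using P0 Zpos by (intro min_mult_nonneg) simp
    also have "\<dots> = 1 / Z * (\<Prod>i\<in>UNIV. (if i = k then m (z$i) else q i (z$i)))"
    proof -
      have "(\<Prod>i\<in>UNIV. (if i = k then m (z$i) else q i (z$i))) = m (z$k) * ?P"
        by (subst prod.remove[of _ k]) (auto intro!: prod.cong)
      then show ?thesis by simp
    qed
    finally have "min (gauss_density S (T *v z)) (gauss_density S (T *v z + \<gamma>))
        = 1 / Z * (\<Prod>i\<in>UNIV. (if i = k then m (z$i) else q i (z$i)))" .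
    moreover have "(\<Prod>i\<in>UNIV. F i (z$i)) = ennreal (\<Prod>i\<in>UNIV. (if i = k then m (z$i) else q i (z$i)))"
      unfolding F_def by (rule prod_ennreal) (auto simp: m_def q_def)
    moreover have X0: "0 \<le> (\<Prod>i\<in>UNIV. (if i = k then m (z$i) else q i (z$i)))"
      by (rule prod_nonneg) (auto simp: m_def q_def)
    ultimately show ?thesis using Zpos ennreal_mult[of "1 / Z" "\<Prod>i\<in>UNIV. (if i = k then m (z$i) else q i (z$i))"] by simp
  qed
  have Fmeas: "F i \<in> borel_measurable borel" for i
    unfolding F_def m_def q_def by measurable
  have intF: "(\<integral>\<^sup>+s. F i s \<partial>lborel) = ennreal (sqrt (2 * pi) / sqrt (d i)) * (if i = k then O1 (sqrt (d k) * t) else 1)" for i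
  proof (cases "i = k")
    case True
    then show ?thesis unfolding F_def m_def q_def using L1D[OF dpos[of k], of t] by simp
  next
    case False
    have "(\<integral>\<^sup>+s. F i s \<partial>lborel) = (\<integral>\<^sup>+s. ennreal (min (exp (- (d i * s\<^sup>2) / 2)) (exp (- (d i * (s + 0)\<^sup>2) / 2))) \<partial>lborel)"
      unfolding F_def q_def using False by simp
    also have "\<dots> = ennreal (sqrt (2 * pi) / sqrt (d i))"
      using L1D[OF dpos[of i], of 0] by (simp add: O1_0)
    finally show ?thesis using False by simp
  qed
  have meas: "(\<lambda>w. ennreal (min (gauss_density S w) (gauss_density S (w + \<gamma>)))) \<in> borel_measurable borel"
    by measurable
  have "(\<integral>\<^sup>+w. ennreal (min (gauss_density S w) (gauss_density S (w + \<gamma>))) \<partial>lborel)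
      = (\<integral>\<^sup>+z. ennreal (min (gauss_density S (T *v z)) (gauss_density S (T *v z + \<gamma>))) \<partial>lborel)"
    using bspec[OF Tinv[unfolded lb_inv_def] meas] by simp
  also have "\<dots> = (\<integral>\<^sup>+z. ennreal (1 / Z) * (\<Prod>i\<in>UNIV. F i (z$i)) \<partial>lborel)"
    by (simp add: pw)
  also have "\<dots> = ennreal (1 / Z) * (\<integral>\<^sup>+z. (\<Prod>i\<in>UNIV. F i (z$i)) \<partial>lborel)"
    by (rule nn_integral_cmult) (use Fmeas in measurable)
  also have "\<dots> = ennreal (1 / Z) * (\<Prod>i\<in>UNIV. ennreal (sqrt (2 * pi) / sqrt (d i)) * (if i = k then O1 (sqrt (d k) * t) else 1))"
    by (simp add: nn_integral_vec_prod[OF Fmeas] intF)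
  also have "(\<Prod>i\<in>UNIV. ennreal (sqrt (2 * pi) / sqrt (d i)) * (if i = k then O1 (sqrt (d k) * t) else 1))
      = ennreal (\<Prod>i\<in>UNIV. sqrt (2 * pi) / sqrt (d i)) * O1 (sqrt (d k) * t)"
  proof -
    have "(\<Prod>i\<in>UNIV. ennreal (sqrt (2 * pi) / sqrt (d i)) * (if i = k then O1 (sqrt (d k) * t) else 1))
        = (\<Prod>i\<in>UNIV. ennreal (sqrt (2 * pi) / sqrt (d i))) * (\<Prod>i\<in>UNIV. (if i = k then O1 (sqrt (d k) * t) else 1))"
      by (rule prod.distrib)
    also have "(\<Prod>i\<in>UNIV. (if i = k then O1 (sqrt (d k) * t) else 1)) = O1 (sqrt (d k) * t)"
      by simp
    also have "(\<Prod>i\<in>UNIV. ennreal (sqrt (2 * pi) / sqrt (d i))) = ennreal (\<Prod>i\<in>UNIV. sqrt (2 * pi) / sqrt (d i))"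
      by (rule prod_ennreal) (simp add: dpos less_imp_le)
    finally show ?thesis .
  qed
  also have "ennreal (1 / Z) * (ennreal (\<Prod>i\<in>UNIV. sqrt (2 * pi) / sqrt (d i)) * O1 (sqrt (d k) * t))
      = O1 (sqrt (d k) * t)"
  proof -
    have "(\<Prod>i\<in>UNIV. sqrt (2 * pi) / sqrt (d i)) = sqrt (2 * pi) ^ CARD('n) / sqrt (\<Prod>i\<in>UNIV. d i)"
      by (simp add: prod_dividef sqrt_prod)
    also have "\<dots> = Z"
      unfolding Z_def detS using prodd by (simp add: real_sqrt_mult real_sqrt_power real_sqrt_divide power_mult_distrib)
    finally have "1 / Z * (\<Prod>i\<in>UNIV. sqrt (2 * pi) / sqrt (d i)) = 1" using Zpos by simp
    moreover have "ennreal (1 / Z) * ennreal (\<Prod>i\<in>UNIV. sqrt (2 * pi) / sqrt (d i)) = ennreal (1 / Z * (\<Prod>i\<in>UNIV. sqrt (2 * pi) / sqrt (d i)))"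
      using Zpos dpos by (intro ennreal_mult[symmetric]) (auto intro!: prod_pos less_imp_le)
    ultimately show ?thesis
      by (simp only: mult.assoc[symmetric]) simp
  qed
  also have "O1 (sqrt (d k) * t) = O1 (sqrt (\<gamma> \<bullet> (matrix_inv S *v \<gamma>)))"
  proof -
    have "sqrt (\<gamma> \<bullet> (matrix_inv S *v \<gamma>)) = sqrt (d k) * \<bar>t\<bar>"
      using gM dpos[of k] by (simp add: M_def real_sqrt_mult)
    then show ?thesis
      by (cases "0 \<le> t") (auto simp: O1_sym[of "sqrt (d k) * t", symmetric])
  qed
  finally show ?thesis .
qed
lemma gauss_total:
  fixes S :: "real^'n::finite^'n"
  assumes S: "pos_def S"
  shows "(\<integral>\<^sup>+w. ennreal (gauss_density S w) \<partial>lborel) = 1"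
  using gauss_overlap[OF S, of 0] by (simp add: O1_0)

lemma lborel_transl:
  fixes g :: "real^'n::finite \<Rightarrow> ennreal"
  assumes g: "g \<in> borel_measurable borel"
  shows "(\<integral>\<^sup>+x. g x \<partial>lborel) = (\<integral>\<^sup>+w. g (c + w) \<partial>lborel)"
proof -
  have "(\<integral>\<^sup>+w. g (c + w) \<partial>lborel) = (\<integral>\<^sup>+x. g x \<partial>distr lborel borel ((+) c))"
    using g by (subst nn_integral_distr) auto
  also have "\<dots> = (\<integral>\<^sup>+x. g x \<partial>lborel)" by (simp add: lborel_distr_plus)
  finally show ?thesis by simp
qed

lemma diag_map_meas:
  fixes c :: "real^'n::finite"
  shows "(\<lambda>w. (c + w, c + w)) \<in> borel \<rightarrow>\<^sub>M (borel :: ((real^'n) \<times> (real^'n)) measure)"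
  by (intro borel_measurable_continuous_onI continuous_intros)

lemma kernel_props:
  fixes S :: "real^'n::finite^'n" and \<mu>1 c \<gamma> :: "real^'n"
  assumes S: "pos_def S" and c: "\<mu>1 + \<gamma> = c"
  defines "\<rho> \<equiv> \<lambda>w. min (gauss_density S w) (gauss_density S (w + \<gamma>))"
  defines "v \<equiv> \<lambda>A. \<integral>\<^sup>+w. indicator A (\<mu>1 + \<gamma> + w, c + w) * ennreal (\<rho> w) \<partial>lborel"
  shows "measure_space UNIV (sets borel) v"
    and "v UNIV \<le> 1"
    and "v UNIV = v sim_rel"
    and "v sim_rel = O1 (sqrt (\<gamma> \<bullet> (matrix_inv S *v \<gamma>)))"
    and "\<forall>A \<in> sets borel. v (A \<times> UNIV) \<le> emeasure (gauss \<mu>1 S) A"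
    and "\<forall>B \<in> sets borel. v (UNIV \<times> B) \<le> emeasure (gauss c S) B"
    and "\<forall>A \<in> sets borel. v A \<le> (\<integral>\<^sup>+xp. indicator A (xp, xp) \<partial>gauss c S)"
proof -
  have \<rho>meas[measurable]: "\<rho> \<in> borel_measurable borel" unfolding \<rho>_def by measurable
  have vA: "v A = (\<integral>\<^sup>+w. indicator A (c + w, c + w) * ennreal (\<rho> w) \<partial>lborel)" for A
    unfolding v_def using c by simp
  have \<rho>le1: "\<rho> w \<le> gauss_density S w" for w unfolding \<rho>_def by simp
  have \<rho>le2: "\<rho> w \<le> gauss_density S (w + \<gamma>)" for w unfolding \<rho>_def by simp
  note fm = diag_map_meas[of c]
  define D where "D = distr (density lborel (\<lambda>w. ennreal (\<rho> w))) (borel :: ((real^'n) \<times> (real^'n)) measure) (\<lambda>w. (c + w, c + w))"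
  have vD: "v A = emeasure D A" if A: "A \<in> sets borel" for A
  proof -
    have pre: "(\<lambda>w. (c + w, c + w)) -` A \<in> sets (borel :: (real^'n) measure)"
      using measurable_sets[OF fm A] by simp
    have "emeasure D A = emeasure (density lborel (\<lambda>w. ennreal (\<rho> w))) ((\<lambda>w. (c + w, c + w)) -` A)"
      unfolding D_def using A fm by (subst emeasure_distr) auto
    also have "\<dots> = (\<integral>\<^sup>+w. ennreal (\<rho> w) * indicator ((\<lambda>w. (c + w, c + w)) -` A) w \<partial>lborel)"
      using pre by (subst emeasure_density) auto
    also have "\<dots> = v A"
      unfolding vA by (auto intro!: nn_integral_cong simp: indicator_def)
    finally show ?thesis by simp
  qed
  have spD: "space D = UNIV" "sets D = sets borel" unfolding D_def by auto
  show "measure_space UNIV (sets borel) v"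
  proof -
    have ms: "measure_space UNIV (sets borel) (emeasure D)"
      using measure_space[of D] spD by simp
    then show ?thesis
      unfolding measure_space_def positive_def countably_additive_def
      by (auto simp: vD subset_eq)
  qed
  have vU: "v UNIV = (\<integral>\<^sup>+w. ennreal (\<rho> w) \<partial>lborel)" by (simp add: vA)
  have vR: "v sim_rel = (\<integral>\<^sup>+w. ennreal (\<rho> w) \<partial>lborel)" by (simp add: vA sim_rel_def indicator_def)
  show "v UNIV = v sim_rel" using vU vR by simp
  show "v sim_rel = O1 (sqrt (\<gamma> \<bullet> (matrix_inv S *v \<gamma>)))"
    using vR gauss_overlap[OF S, of \<gamma>] by (simp add: \<rho>_def)
  show "v UNIV \<le> 1"
  proof -
    have "v UNIV \<le> (\<integral>\<^sup>+w. ennreal (gauss_density S w) \<partial>lborel)"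
      unfolding vU by (intro nn_integral_mono ennreal_leI) (simp add: \<rho>le1)
    then show ?thesis using gauss_total[OF S] by simp
  qed
  show "\<forall>A \<in> sets borel. v (A \<times> UNIV) \<le> emeasure (gauss \<mu>1 S) A"
  proof
    fix A :: "(real^'n) set" assume A[measurable]: "A \<in> sets borel"
    have "emeasure (gauss \<mu>1 S) A = (\<integral>\<^sup>+x. ennreal (gauss_density S (x - \<mu>1)) * indicator A x \<partial>lborel)"
      unfolding gauss_def using A by (subst emeasure_density) auto
    also have "\<dots> = (\<integral>\<^sup>+w. ennreal (gauss_density S (c + w - \<mu>1)) * indicator A (c + w) \<partial>lborel)"
      by (rule lborel_transl) measurable
    also have "\<dots> = (\<integral>\<^sup>+w. indicator A (c + w) * ennreal (gauss_density S (w + \<gamma>)) \<partial>lborel)"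
    proof -
      have e: "c + w - \<mu>1 = w + \<gamma>" for w using c by (simp add: algebra_simps)
      show ?thesis by (intro nn_integral_cong) (simp only: e mult.commute)
    qed
    finally have eq: "emeasure (gauss \<mu>1 S) A = (\<integral>\<^sup>+w. indicator A (c + w) * ennreal (gauss_density S (w + \<gamma>)) \<partial>lborel)" .
    have "v (A \<times> UNIV) = (\<integral>\<^sup>+w. indicator A (c + w) * ennreal (\<rho> w) \<partial>lborel)"
      by (simp add: vA indicator_def)
    also have "\<dots> \<le> (\<integral>\<^sup>+w. indicator A (c + w) * ennreal (gauss_density S (w + \<gamma>)) \<partial>lborel)"
      by (intro nn_integral_mono mult_left_mono ennreal_leI) (auto simp: \<rho>le2)
    finally show "v (A \<times> UNIV) \<le> emeasure (gauss \<mu>1 S) A" using eq by simp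
  qed
  have gc: "(\<integral>\<^sup>+x. g x \<partial>gauss c S) = (\<integral>\<^sup>+w. ennreal (gauss_density S w) * g (c + w) \<partial>lborel)"
    if g[measurable]: "g \<in> borel_measurable borel" for g
  proof -
    have "(\<integral>\<^sup>+x. g x \<partial>gauss c S) = (\<integral>\<^sup>+x. ennreal (gauss_density S (x - c)) * g x \<partial>lborel)"
      unfolding gauss_def by (subst nn_integral_density) auto
    also have "\<dots> = (\<integral>\<^sup>+w. ennreal (gauss_density S (c + w - c)) * g (c + w) \<partial>lborel)"
      by (rule lborel_transl) measurable
    finally show ?thesis by simp
  qed
  show "\<forall>B \<in> sets borel. v (UNIV \<times> B) \<le> emeasure (gauss c S) B"
  proof
    fix B :: "(real^'n) set" assume B[measurable]: "B \<in> sets borel"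
    have "emeasure (gauss c S) B = (\<integral>\<^sup>+x. indicator B x \<partial>gauss c S)"
      by (simp add: gauss_def)
    also have "\<dots> = (\<integral>\<^sup>+w. ennreal (gauss_density S w) * indicator B (c + w) \<partial>lborel)"
      by (rule gc) measurable
    finally have eq: "emeasure (gauss c S) B = (\<integral>\<^sup>+w. ennreal (gauss_density S w) * indicator B (c + w) \<partial>lborel)" .
    have "v (UNIV \<times> B) = (\<integral>\<^sup>+w. indicator B (c + w) * ennreal (\<rho> w) \<partial>lborel)"
      by (simp add: vA indicator_def)
    also have "\<dots> \<le> (\<integral>\<^sup>+w. ennreal (gauss_density S w) * indicator B (c + w) \<partial>lborel)"
      by (intro nn_integral_mono) (auto simp: \<rho>le1 indicator_def intro!: ennreal_leI)
    finally show "v (UNIV \<times> B) \<le> emeasure (gauss c S) B" using eq by simp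
  qed
  show "\<forall>A \<in> sets borel. v A \<le> (\<integral>\<^sup>+xp. indicator A (xp, xp) \<partial>gauss c S)"
  proof
    fix A :: "((real^'n) \<times> (real^'n)) set" assume A: "A \<in> sets borel"
    have im: "(\<lambda>xp::real^'n. indicator A (xp, xp) :: ennreal) \<in> borel_measurable borel"
    proof -
      have "(\<lambda>xp::real^'n. (xp, xp)) \<in> borel \<rightarrow>\<^sub>M (borel :: ((real^'n) \<times> (real^'n)) measure)"
        by (intro borel_measurable_continuous_onI continuous_intros)
      from measurable_compose[OF this borel_measurable_indicator[OF A]] show ?thesis by (simp add: o_def)
    qed
    have "(\<integral>\<^sup>+xp. indicator A (xp, xp) \<partial>gauss c S) = (\<integral>\<^sup>+w. ennreal (gauss_density S w) * indicator A (c + w, c + w) \<partial>lborel)"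
      by (rule gc[OF im])
    moreover have "v A \<le> (\<integral>\<^sup>+w. ennreal (gauss_density S w) * indicator A (c + w, c + w) \<partial>lborel)"
      unfolding vA by (intro nn_integral_mono) (auto simp: \<rho>le1 indicator_def intro!: ennreal_leI)
    ultimately show "v A \<le> (\<integral>\<^sup>+xp. indicator A (xp, xp) \<partial>gauss c S)" by simp
  qed
qed
lemma sum_UNIV_prod:
  fixes g :: "('a::finite \<times> 'b::finite) \<Rightarrow> real"
  shows "(\<Sum>p\<in>UNIV. g p) = (\<Sum>j\<in>UNIV. \<Sum>i\<in>UNIV. g (j, i))"
proof -
  have "(\<Sum>j\<in>UNIV. \<Sum>i\<in>UNIV. g (j, i)) = (\<Sum>(j,i)\<in>UNIV \<times> UNIV. g (j, i))"
    by (rule sum.cartesian_product)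
  also have "\<dots> = (\<Sum>p\<in>UNIV \<times> UNIV. g p)"
    by (simp add: case_prod_unfold)
  finally show ?thesis by simp
qed

lemma kron_quad:
  fixes M :: "real^'n::finite^'n" and x :: "real^('n \<times> 'm::finite)" and f :: "'x \<Rightarrow> 'u \<Rightarrow> real^'m"
  shows "x \<bullet> (kron M (PhiTPhi f N xs us) *v x) =
    (\<Sum>l<N. (\<chi> j. \<Sum>i\<in>UNIV. x$(j,i) * f (xs l) (us l) $ i) \<bullet> (M *v (\<chi> j. \<Sum>i\<in>UNIV. x$(j,i) * f (xs l) (us l) $ i)))"
proof -
  define \<phi> where "\<phi> l = f (xs l) (us l)" for l
  have "x \<bullet> (kron M (PhiTPhi f N xs us) *v x) =
      (\<Sum>p\<in>UNIV. \<Sum>q\<in>UNIV. \<Sum>l<N. x$p * (M$fst p$fst q * (\<phi> l$snd p * \<phi> l$snd q) * x$q))"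
    by (simp add: inner_vec_def matrix_vector_mult_def kron_def PhiTPhi_def \<phi>_def sum_distrib_left sum_distrib_right)
  also have "\<dots> = (\<Sum>p\<in>UNIV. \<Sum>l<N. \<Sum>q\<in>UNIV. x$p * (M$fst p$fst q * (\<phi> l$snd p * \<phi> l$snd q) * x$q))"
    by (rule sum.cong[OF refl], rule sum.swap)
  also have "\<dots> = (\<Sum>l<N. \<Sum>p\<in>UNIV. \<Sum>q\<in>UNIV. x$p * (M$fst p$fst q * (\<phi> l$snd p * \<phi> l$snd q) * x$q))"
    by (rule sum.swap)
  also have "\<dots> = (\<Sum>l<N. (\<chi> j. \<Sum>i\<in>UNIV. x$(j,i) * \<phi> l $ i) \<bullet> (M *v (\<chi> j. \<Sum>i\<in>UNIV. x$(j,i) * \<phi> l $ i)))"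
  proof (rule sum.cong[OF refl])
    fix l
    show "(\<Sum>p\<in>UNIV. \<Sum>q\<in>UNIV. x$p * (M$fst p$fst q * (\<phi> l$snd p * \<phi> l$snd q) * x$q)) =
      (\<chi> j. \<Sum>i\<in>UNIV. x$(j,i) * \<phi> l $ i) \<bullet> (M *v (\<chi> j. \<Sum>i\<in>UNIV. x$(j,i) * \<phi> l $ i))"
    proof -
      have L: "(\<Sum>p\<in>UNIV. \<Sum>q\<in>UNIV. x$p * (M$fst p$fst q * (\<phi> l$snd p * \<phi> l$snd q) * x$q)) =
        (\<Sum>j\<in>UNIV. \<Sum>i\<in>UNIV. \<Sum>j'\<in>UNIV. \<Sum>i'\<in>UNIV. x$(j,i) * (M$j$j' * (\<phi> l$i * \<phi> l$i') * x$(j',i')))"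
        by (simp only: sum_UNIV_prod fst_conv snd_conv)
      have R: "(\<chi> j. \<Sum>i\<in>UNIV. x$(j,i) * \<phi> l $ i) \<bullet> (M *v (\<chi> j. \<Sum>i\<in>UNIV. x$(j,i) * \<phi> l $ i)) =
        (\<Sum>j\<in>UNIV. (\<Sum>i\<in>UNIV. x$(j,i) * \<phi> l $ i) * (\<Sum>j'\<in>UNIV. M$j$j' * (\<Sum>i'\<in>UNIV. x$(j',i') * \<phi> l $ i')))"
        by (simp add: inner_vec_def matrix_vector_mult_def)
      also have "\<dots> = (\<Sum>j\<in>UNIV. \<Sum>j'\<in>UNIV. \<Sum>i'\<in>UNIV. \<Sum>i\<in>UNIV. (x$(j,i) * \<phi> l $ i) * (M$j$j' * (x$(j',i') * \<phi> l $ i')))"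
        by (simp only: sum_distrib_left sum_distrib_right)
      finally have R': "(\<chi> j. \<Sum>i\<in>UNIV. x$(j,i) * \<phi> l $ i) \<bullet> (M *v (\<chi> j. \<Sum>i\<in>UNIV. x$(j,i) * \<phi> l $ i)) =
          (\<Sum>j\<in>UNIV. \<Sum>j'\<in>UNIV. \<Sum>i'\<in>UNIV. \<Sum>i\<in>UNIV. (x$(j,i) * \<phi> l $ i) * (M$j$j' * (x$(j',i') * \<phi> l $ i')))" .
      have swp: "(\<Sum>i\<in>UNIV. \<Sum>j'\<in>UNIV. \<Sum>i'\<in>UNIV. T i j' i') = (\<Sum>j'\<in>UNIV. \<Sum>i'\<in>UNIV. \<Sum>i\<in>UNIV. T i j' i')"
        for T :: "'m \<Rightarrow> 'n \<Rightarrow> 'm \<Rightarrow> real"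
      proof -
        have "(\<Sum>i\<in>UNIV. \<Sum>j'\<in>UNIV. \<Sum>i'\<in>UNIV. T i j' i') = (\<Sum>j'\<in>UNIV. \<Sum>i\<in>UNIV. \<Sum>i'\<in>UNIV. T i j' i')"
          by (rule sum.swap)
        also have "\<dots> = (\<Sum>j'\<in>UNIV. \<Sum>i'\<in>UNIV. \<Sum>i\<in>UNIV. T i j' i')"
          by (rule sum.cong[OF refl], rule sum.swap)
        finally show ?thesis .
      qed
      show ?thesis unfolding L R' by (rule sum.cong[OF refl], subst swp) (intro sum.cong refl, simp only: mult_ac)
    qed
  qed
  finally show ?thesis by (simp add: \<phi>_def)
qed
lemma transpose_entry: "transpose A $ i $ j = A $ j $ i"
  by (simp add: transpose_def)

lemma blr_A_props:
  fixes S :: "real^'n::finite^'n" and S0 :: "real^('n \<times> 'm::finite)^('n \<times> 'm)"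
    and f :: "'x \<Rightarrow> 'u \<Rightarrow> real^'m"
  assumes S: "pos_def S" and S0: "pos_def S0"
  shows "transpose (blr_SigmaN_inv S S0 f N xs us) = blr_SigmaN_inv S S0 f N xs us"
    and "\<forall>x. x \<noteq> 0 \<longrightarrow> 0 < x \<bullet> (blr_SigmaN_inv S S0 f N xs us *v x)"
proof -
  have Ssym: "transpose S = S" and Spd: "\<forall>x. x \<noteq> 0 \<longrightarrow> 0 < x \<bullet> (S *v x)"
    using S by (auto simp: pos_def_def)
  have S0sym: "transpose S0 = S0" and S0pd: "\<forall>x. x \<noteq> 0 \<longrightarrow> 0 < x \<bullet> (S0 *v x)"
    using S0 by (auto simp: pos_def_def)
  note FS = pd_inv_facts[OF Ssym Spd]
  note FS0 = pd_inv_facts[OF S0sym S0pd]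
  let ?M = "matrix_inv S"
  let ?K = "kron ?M (PhiTPhi f N xs us)"
  have Msym: "?M $ a $ b = ?M $ b $ a" for a b
    using FS(3) by (metis transpose_entry)
  have S0isym: "matrix_inv S0 $ a $ b = matrix_inv S0 $ b $ a" for a b
    using FS0(3) by (metis transpose_entry)
  have Psym: "PhiTPhi f N xs us $ a $ b = PhiTPhi f N xs us $ b $ a" for a b
    by (simp add: PhiTPhi_def mult.commute)
  show "transpose (blr_SigmaN_inv S S0 f N xs us) = blr_SigmaN_inv S S0 f N xs us"
    unfolding blr_SigmaN_inv_def
    by (simp add: vec_eq_iff transpose_entry kron_def S0isym Msym Psym)
  have Mpsd: "0 \<le> z \<bullet> (?M *v z)" for z
    using FS(4) by (cases "z = 0") (auto intro: less_imp_le)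
  have Kpsd: "0 \<le> x \<bullet> (?K *v x)" for x
    unfolding kron_quad by (intro sum_nonneg Mpsd)
  show "\<forall>x. x \<noteq> 0 \<longrightarrow> 0 < x \<bullet> (blr_SigmaN_inv S S0 f N xs us *v x)"
  proof (intro allI impI)
    fix x :: "real^('n \<times> 'm)" assume x: "x \<noteq> 0"
    have "x \<bullet> (blr_SigmaN_inv S S0 f N xs us *v x) = x \<bullet> (matrix_inv S0 *v x) + x \<bullet> (?K *v x)"
      unfolding blr_SigmaN_inv_def by (simp add: matrix_vector_mult_add_rdistrib inner_add_right)
    moreover have "0 < x \<bullet> (matrix_inv S0 *v x)" using FS0(4) x by blast
    ultimately show "0 < x \<bullet> (blr_SigmaN_inv S S0 f N xs us *v x)" using Kpsd[of x] by linarith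
  qed
qed

lemma cs_form:
  fixes A :: "real^'n::finite^'n"
  assumes sym: "transpose A = A" and pd: "\<forall>x. x \<noteq> 0 \<longrightarrow> 0 < x \<bullet> (A *v x)"
  shows "(x \<bullet> (A *v y))\<^sup>2 \<le> (x \<bullet> (A *v x)) * (y \<bullet> (A *v y))"
proof (cases "y = 0")
  case True
  then show ?thesis by simp
next
  case False
  have psd: "0 \<le> z \<bullet> (A *v z)" for z
    using pd by (cases "z = 0") (auto intro: less_imp_le)
  define a where "a = x \<bullet> (A *v y)"
  define b where "b = y \<bullet> (A *v y)"
  have b: "0 < b" using pd False unfolding b_def by blast
  have yx: "y \<bullet> (A *v x) = a" unfolding a_def using sym_bf[OF sym] by simp
  define t where "t = - a / b"
  have "0 \<le> (x + t *\<^sub>R y) \<bullet> (A *v (x + t *\<^sub>R y))" by (rule psd)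
  also have "(x + t *\<^sub>R y) \<bullet> (A *v (x + t *\<^sub>R y)) = x \<bullet> (A *v x) + 2 * t * a + t\<^sup>2 * b"
    by (simp add: matrix_vector_right_distrib matrix_vector_mult_scaleR inner_add_left inner_add_right
        a_def[symmetric] b_def[symmetric] yx power2_eq_square algebra_simps)
  also have "\<dots> = x \<bullet> (A *v x) - a\<^sup>2 / b"
    using b by (simp add: t_def power2_eq_square field_simps)
  finally have "a\<^sup>2 / b \<le> x \<bullet> (A *v x)" by simp
  then have "a\<^sup>2 \<le> x \<bullet> (A *v x) * b" using b by (simp add: divide_le_eq)
  then show ?thesis by (simp add: a_def b_def)
qed

lemma norm_le_form:
  fixes A :: "real^'n::finite^'n"
  assumes sym: "transpose A = A" and pd: "\<forall>x. x \<noteq> 0 \<longrightarrow> 0 < x \<bullet> (A *v x)"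
  shows "(norm d)\<^sup>2 \<le> onorm (\<lambda>x. matrix_inv A *v x) * (d \<bullet> (A *v d))"
proof (cases "d = 0")
  case True
  then show ?thesis by simp
next
  case False
  note FA = pd_inv_facts[OF sym pd]
  let ?B = "matrix_inv A"
  let ?o = "onorm (\<lambda>x. ?B *v x)"
  define y where "y = ?B *v d"
  have Ay: "A *v y = d" unfolding y_def using FA(1) by (simp add: matrix_vector_mul_assoc)
  have bl: "bounded_linear (\<lambda>x. ?B *v x)" by (rule matrix_vector_mul_bounded_linear)
  have dAd: "0 < d \<bullet> (A *v d)" using pd False by blast
  have nd: "0 < norm d" using False by simp
  have "(norm d)\<^sup>2 = d \<bullet> (A *v y)" by (simp add: Ay power2_norm_eq_inner)
  then have "((norm d)\<^sup>2)\<^sup>2 \<le> (d \<bullet> (A *v d)) * (y \<bullet> (A *v y))"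
    using cs_form[OF sym pd, of d y] by simp
  also have "y \<bullet> (A *v y) = d \<bullet> (?B *v d)" unfolding Ay by (simp add: y_def inner_commute)
  also have "d \<bullet> (?B *v d) \<le> norm d * norm (?B *v d)" by (rule real_inner_class.Cauchy_Schwarz_ineq2[THEN abs_le_D1])
  also have "norm (?B *v d) \<le> ?o * norm d" by (rule onorm[OF bl])
  finally have "((norm d)\<^sup>2)\<^sup>2 \<le> (d \<bullet> (A *v d)) * (norm d * (?o * norm d))"
    using dAd nd by (simp add: mult_left_mono)
  then have "(norm d)\<^sup>2 * (norm d)\<^sup>2 \<le> (?o * (d \<bullet> (A *v d))) * (norm d)\<^sup>2"
    by (simp add: power2_eq_square algebra_simps)
  moreover have "0 < (norm d)\<^sup>2" using nd by simp
  ultimately show ?thesis using mult_le_cancel_right_pos by blast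
qed
lemma vec_unvec: "vec_theta (unvec_theta v) = v"
  by (simp add: vec_theta_def unvec_theta_def vec_eq_iff)

lemma vec_diff: "vec_theta (a - b) = vec_theta a - vec_theta b"
  by (simp add: vec_theta_def vec_eq_iff)

lemma unvec_vec: "unvec_theta (vec_theta th) = th"
  by (simp add: vec_theta_def unvec_theta_def vec_eq_iff)

lemma unvec_diff: "unvec_theta (a - b) = unvec_theta a - unvec_theta b"
  by (simp add: unvec_theta_def vec_eq_iff)

lemma transpose_mv_bound:
  fixes X :: "real^'n::finite^'m::finite" and v :: "real^'m"
  shows "(norm (transpose X *v v))\<^sup>2 \<le> (norm (vec_theta X))\<^sup>2 * (norm v)\<^sup>2"
proof -
  have comp: "(transpose X *v v) $ j = (\<Sum>i\<in>UNIV. X$i$j * v$i)" for j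
    by (simp add: matrix_vector_mult_def transpose_entry del: transpose_matrix_vector)
  have "(norm (transpose X *v v))\<^sup>2 = (\<Sum>j\<in>UNIV. (\<Sum>i\<in>UNIV. X$i$j * v$i)\<^sup>2)"
    unfolding power2_norm_eq_inner by (simp add: inner_vec_def comp power2_eq_square del: transpose_matrix_vector)
  also have "\<dots> \<le> (\<Sum>j\<in>UNIV. (\<Sum>i\<in>UNIV. (X$i$j)\<^sup>2) * (\<Sum>i\<in>UNIV. (v$i)\<^sup>2))"
    by (intro sum_mono Cauchy_Schwarz_ineq_sum)
  also have "\<dots> = (\<Sum>j\<in>UNIV. \<Sum>i\<in>UNIV. (X$i$j)\<^sup>2) * (\<Sum>i\<in>UNIV. (v$i)\<^sup>2)"
    by (simp add: sum_distrib_right)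
  also have "(\<Sum>j\<in>UNIV. \<Sum>i\<in>UNIV. (X$i$j)\<^sup>2) = (norm (vec_theta X))\<^sup>2"
    unfolding power2_norm_eq_inner by (simp add: inner_vec_def sum_UNIV_prod vec_theta_def power2_eq_square)
  also have "(\<Sum>i\<in>UNIV. (v$i)\<^sup>2) = (norm v)\<^sup>2"
    unfolding power2_norm_eq_inner by (simp add: inner_vec_def power2_eq_square)
  finally show ?thesis .
qed

lemma form_onorm_bound:
  fixes M :: "real^'n::finite^'n"
  shows "g \<bullet> (M *v g) \<le> onorm (\<lambda>x. M *v x) * (norm g)\<^sup>2"
proof -
  have bl: "bounded_linear (\<lambda>x. M *v x)" by (rule matrix_vector_mul_bounded_linear)
  have "g \<bullet> (M *v g) \<le> norm g * norm (M *v g)"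
    by (rule real_inner_class.Cauchy_Schwarz_ineq2[THEN abs_le_D1])
  also have "\<dots> \<le> norm g * (onorm (\<lambda>x. M *v x) * norm g)"
    by (intro mult_left_mono onorm[OF bl]) simp
  finally show ?thesis by (simp add: power2_eq_square algebra_simps)
qed

lemma credible_bound:
  fixes S :: "real^'n::finite^'n" and S0 :: "real^('n \<times> 'm::finite)^('n \<times> 'm)"
    and f :: "'x \<Rightarrow> 'u \<Rightarrow> real^'m" and v :: "real^'m"
  assumes S: "pos_def S" and S0: "pos_def S0"
    and th: "th \<in> credible_set S S0 mu0 f N xs us xps \<alpha>"
  shows "(transpose (th - blr_estimate S S0 mu0 f N xs us xps) *v v) \<bullet>
           (matrix_inv S *v (transpose (th - blr_estimate S S0 mu0 f N xs us xps) *v v))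
         \<le> (onorm (\<lambda>x. matrix_inv S *v x) * onorm (\<lambda>x. blr_SigmaN S S0 f N xs us *v x)
               * real CARD('n) * chi2_quantile CARD('n) (1 - \<alpha>)) * (norm v)\<^sup>2"
    and "0 \<le> onorm (\<lambda>x. matrix_inv S *v x) * onorm (\<lambda>x. blr_SigmaN S S0 f N xs us *v x)
               * real CARD('n) * chi2_quantile CARD('n) (1 - \<alpha>)"
proof -
  let ?A = "blr_SigmaN_inv S S0 f N xs us"
  let ?mu = "blr_muN S S0 mu0 f N xs us xps"
  let ?thh = "blr_estimate S S0 mu0 f N xs us xps"
  let ?oM = "onorm (\<lambda>x. matrix_inv S *v x)"
  let ?oN = "onorm (\<lambda>x. blr_SigmaN S S0 f N xs us *v x)"
  let ?q = "real CARD('n) * chi2_quantile CARD('n) (1 - \<alpha>)"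
  define d where "d = vec_theta th - ?mu"
  define \<gamma> where "\<gamma> = transpose (th - ?thh) *v v"
  note AP = blr_A_props[OF S S0, of f N xs us]
  have cred: "d \<bullet> (?A *v d) \<le> ?q"
    using th unfolding credible_set_def d_def by (simp add: Let_def mult.assoc)
  have dA0: "0 \<le> d \<bullet> (?A *v d)"
    using AP(2) by (cases "d = 0") (auto intro: less_imp_le)
  have vd: "vec_theta (th - ?thh) = d"
    by (simp add: blr_estimate_def d_def vec_diff vec_unvec)
  have oM: "0 \<le> ?oM" by (intro onorm_pos_le matrix_vector_mul_bounded_linear)
  have oN: "0 \<le> ?oN" by (intro onorm_pos_le matrix_vector_mul_bounded_linear)
  have nd: "(norm d)\<^sup>2 \<le> ?oN * (d \<bullet> (?A *v d))"
    using norm_le_form[OF AP(1) AP(2), of d] by (simp add: blr_SigmaN_def)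
  have ng: "(norm \<gamma>)\<^sup>2 \<le> (norm d)\<^sup>2 * (norm v)\<^sup>2"
    using transpose_mv_bound[of "th - ?thh" v] by (simp add: \<gamma>_def vd)
  have "\<gamma> \<bullet> (matrix_inv S *v \<gamma>) \<le> ?oM * (norm \<gamma>)\<^sup>2" by (rule form_onorm_bound)
  also have "\<dots> \<le> ?oM * ((norm d)\<^sup>2 * (norm v)\<^sup>2)" by (intro mult_left_mono ng oM)
  also have "\<dots> \<le> ?oM * ((?oN * (d \<bullet> (?A *v d))) * (norm v)\<^sup>2)"
    by (intro mult_left_mono mult_right_mono nd oM) simp
  also have "\<dots> \<le> ?oM * ((?oN * ?q) * (norm v)\<^sup>2)"
    by (intro mult_left_mono mult_right_mono cred oM oN) simp_all
  finally show "\<gamma> \<bullet> (matrix_inv S *v \<gamma>) \<le> (?oM * ?oN * real CARD('n) * chi2_quantile CARD('n) (1 - \<alpha>)) * (norm v)\<^sup>2"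
    by (simp add: mult.assoc)
  show "0 \<le> ?oM * ?oN * real CARD('n) * chi2_quantile CARD('n) (1 - \<alpha>)"
    using oM oN cred dA0 by (simp add: mult.assoc)
qed
lemma cdf_mono:
  assumes "a \<le> b"
  shows "std_normal_cdf a \<le> std_normal_cdf b"
proof -
  interpret prob_space "density lborel std_normal_density"
    by (rule prob_space_normal_density) simp
  show ?thesis unfolding std_normal_cdf_def
    using assms by (intro finite_measure_mono) auto
qed

lemma mv_transpose_diff:
  fixes X Y :: "real^'n::finite^'m::finite"
  shows "transpose (X - Y) *v v = transpose X *v v - transpose Y *v v"
  by (simp add: vec_eq_iff matrix_vector_mult_def transpose_entry sum_subtractf left_diff_distrib
      del: transpose_matrix_vector)

lemma point_props:
  fixes S :: "real^'n::finite^'n" and f :: "real^'n \<Rightarrow> 'u \<Rightarrow> real^'m::finite"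
    and th thh :: "real^'n^'m"
  assumes S: "pos_def S"
    and bound: "(transpose (th - thh) *v f x u) \<bullet> (matrix_inv S *v (transpose (th - thh) *v f x u)) \<le> r * (norm (f x u))\<^sup>2"
    and r0: "0 \<le> r"
  shows "measure_space UNIV (sets borel) (sub_kernel S f thh th x x u)
         \<and> sub_kernel S f thh th x x u UNIV \<le> 1
         \<and> sub_kernel S f thh th x x u UNIV = sub_kernel S f thh th x x u sim_rel
         \<and> ennreal (1 - (1 - 2 * std_normal_cdf (- (sqrt r / 2) * norm (f x u)))) \<le> sub_kernel S f thh th x x u sim_rel
         \<and> (\<forall>A \<in> sets borel. sub_kernel S f thh th x x u (A \<times> UNIV) \<le> emeasure (gauss (transpose thh *v f x u) S) A)
         \<and> (\<forall>B \<in> sets borel. sub_kernel S f thh th x x u (UNIV \<times> B) \<le> emeasure (gauss (transpose th *v f x u) S) B)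
         \<and> (\<forall>A \<in> sets borel. (\<integral>\<^sup>+ xp. indicator A (xp + transpose thh *v (f x u - f x u), xp)
               \<partial>gauss (transpose th *v f x u) S) \<ge> sub_kernel S f thh th x x u A)"
proof -
  define \<mu>1 where "\<mu>1 = transpose thh *v f x u"
  define \<gamma> where "\<gamma> = transpose (th - thh) *v f x u"
  define c where "c = transpose th *v f x u"
  have c: "\<mu>1 + \<gamma> = c" unfolding \<mu>1_def \<gamma>_def c_def by (simp add: mv_transpose_diff del: transpose_matrix_vector)
  have sk: "sub_kernel S f thh th x x u = (\<lambda>A. \<integral>\<^sup>+w. indicator A (\<mu>1 + \<gamma> + w, c + w) * ennreal (min (gauss_density S w) (gauss_density S (w + \<gamma>))) \<partial>lborel)"
    by (simp add: fun_eq_iff sub_kernel_def Let_def \<mu>1_def \<gamma>_def c_def)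
  note KP = kernel_props[OF S c]
  have low: "ennreal (1 - (1 - 2 * std_normal_cdf (- (sqrt r / 2) * norm (f x u)))) \<le> O1 (sqrt (\<gamma> \<bullet> (matrix_inv S *v \<gamma>)))"
  proof -
    have Ssym: "transpose S = S" and Spd: "\<forall>x. x \<noteq> 0 \<longrightarrow> 0 < x \<bullet> (S *v x)"
      using S by (auto simp: pos_def_def)
    have "0 \<le> \<gamma> \<bullet> (matrix_inv S *v \<gamma>)"
      using pd_inv_facts(4)[OF Ssym Spd] by (cases "\<gamma> = 0") (auto intro: less_imp_le)
    then have g0: "0 \<le> sqrt (\<gamma> \<bullet> (matrix_inv S *v \<gamma>))" by simp
    have "sqrt (\<gamma> \<bullet> (matrix_inv S *v \<gamma>)) \<le> sqrt (r * (norm (f x u))\<^sup>2)"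
      using bound by (simp add: \<gamma>_def)
    also have "\<dots> = sqrt r * norm (f x u)" using r0 by (simp add: real_sqrt_mult)
    finally have le: "sqrt (\<gamma> \<bullet> (matrix_inv S *v \<gamma>)) \<le> sqrt r * norm (f x u)" .
    have "std_normal_cdf (- (sqrt r / 2) * norm (f x u)) \<le> std_normal_cdf (- sqrt (\<gamma> \<bullet> (matrix_inv S *v \<gamma>)) / 2)"
      using le by (intro cdf_mono) simp
    then show ?thesis
      by (simp add: O1_pos[OF g0]) (intro ennreal_leI, simp)
  qed
  have refl: "(\<integral>\<^sup>+ xp. indicator A (xp + transpose thh *v (f x u - f x u), xp) \<partial>gauss (transpose th *v f x u) S)
      = (\<integral>\<^sup>+ xp. indicator A (xp, xp) \<partial>gauss c S)" for A :: "((real^'n) \<times> (real^'n)) set"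
    by (simp add: c_def)
  show ?thesis
    unfolding sk refl \<mu>1_def[symmetric] c_def[symmetric] using KP low by (simp del: transpose_matrix_vector)
qed
theorem theorem5:
  fixes f :: "real^'n \<Rightarrow> 'u \<Rightarrow> real^'m" and h :: "real^'n \<Rightarrow> 'y"
    and U :: "'u measure" and Y :: "'y measure"
    and S :: "real^'n^'n"
    and S0 :: "real^('n \<times> 'm)^('n \<times> 'm)" and mu0 :: "real^('n \<times> 'm)"
    and N :: nat and xs :: "nat \<Rightarrow> real^'n" and us :: "nat \<Rightarrow> 'u" and xps :: "nat \<Rightarrow> real^'n"
    and \<alpha> :: real and x0 :: "real^'n"
  assumes f_meas: "(\<lambda>(x, u). f x u) \<in> borel \<Otimes>\<^sub>M U \<rightarrow>\<^sub>M borel"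
    and h_meas: "h \<in> borel \<rightarrow>\<^sub>M Y"
    and S_pd: "pos_def S"
    and S0_pd: "pos_def S0"
    and data_inputs: "\<forall>i<N. us i \<in> space U"
    and alpha: "0 < \<alpha>" "\<alpha> < 1"
  shows "\<forall>th \<in> credible_set S S0 mu0 f N xs us xps \<alpha>.
    (let thh = blr_estimate S S0 mu0 f N xs us xps;
         v = sub_kernel S f thh th;
         r = onorm (\<lambda>x. matrix_inv S *v x) * onorm (\<lambda>x. blr_SigmaN S S0 f N xs us *v x)
               * real CARD('n) * chi2_quantile CARD('n) (1 - \<alpha>);
         \<delta> = (\<lambda>xh u. 1 - 2 * std_normal_cdf (- (sqrt r / 2) * norm (f xh u)))
     in (x0, x0) \<in> sim_rel
      \<and> (\<forall>(xh, x) \<in> sim_rel. \<forall>u \<in> space U.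
           measure_space UNIV (sets borel) (v xh x u)
         \<and> v xh x u UNIV \<le> 1
         \<and> v xh x u UNIV = v xh x u sim_rel
         \<and> ennreal (1 - \<delta> xh u) \<le> v xh x u sim_rel
         \<and> (\<forall>A \<in> sets borel. v xh x u (A \<times> UNIV) \<le> emeasure (gauss (transpose thh *v f xh u) S) A)
         \<and> (\<forall>B \<in> sets borel. v xh x u (UNIV \<times> B) \<le> emeasure (gauss (transpose th *v f x u) S) B)
         \<and> h xh = h x)
      \<and> (\<forall>(xh, x) \<in> sim_rel. \<forall>u \<in> space U. \<forall>A \<in> sets borel.
           (\<integral>\<^sup>+ xp. indicator A (xp + transpose thh *v (f xh u - f x u), xp)
               \<partial>gauss (transpose th *v f x u) S) \<ge> v xh x u A))"
proof (intro ballI)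
  fix th assume th: "th \<in> credible_set S S0 mu0 f N xs us xps \<alpha>"
  let ?thh = "blr_estimate S S0 mu0 f N xs us xps"
  let ?r = "onorm (\<lambda>x. matrix_inv S *v x) * onorm (\<lambda>x. blr_SigmaN S S0 f N xs us *v x)
               * real CARD('n) * chi2_quantile CARD('n) (1 - \<alpha>)"
  have r0: "0 \<le> ?r" using credible_bound(2)[OF S_pd S0_pd th] .
  note key = point_props[where f=f and th=th and thh="blr_estimate S S0 mu0 f N xs us xps", OF S_pd credible_bound(1)[OF S_pd S0_pd th] r0]
  have A1: "(x0, x0) \<in> sim_rel" by (simp add: sim_rel_def)
  have A2: "\<forall>(xh, x) \<in> sim_rel. \<forall>u \<in> space U.
           measure_space UNIV (sets borel) (sub_kernel S f ?thh th xh x u)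
         \<and> sub_kernel S f ?thh th xh x u UNIV \<le> 1
         \<and> sub_kernel S f ?thh th xh x u UNIV = sub_kernel S f ?thh th xh x u sim_rel
         \<and> ennreal (1 - (1 - 2 * std_normal_cdf (- (sqrt ?r / 2) * norm (f xh u)))) \<le> sub_kernel S f ?thh th xh x u sim_rel
         \<and> (\<forall>A \<in> sets borel. sub_kernel S f ?thh th xh x u (A \<times> UNIV) \<le> emeasure (gauss (transpose ?thh *v f xh u) S) A)
         \<and> (\<forall>B \<in> sets borel. sub_kernel S f ?thh th xh x u (UNIV \<times> B) \<le> emeasure (gauss (transpose th *v f x u) S) B)
         \<and> h xh = h x"
  proof (intro ballI)
    fix p :: "(real^'n) \<times> (real^'n)" assume p: "p \<in> sim_rel"
    obtain x where px: "p = (x, x)" using p by (auto simp: sim_rel_def)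
    show "case p of (xh, x) \<Rightarrow> \<forall>u \<in> space U.
           measure_space UNIV (sets borel) (sub_kernel S f ?thh th xh x u)
         \<and> sub_kernel S f ?thh th xh x u UNIV \<le> 1
         \<and> sub_kernel S f ?thh th xh x u UNIV = sub_kernel S f ?thh th xh x u sim_rel
         \<and> ennreal (1 - (1 - 2 * std_normal_cdf (- (sqrt ?r / 2) * norm (f xh u)))) \<le> sub_kernel S f ?thh th xh x u sim_rel
         \<and> (\<forall>A \<in> sets borel. sub_kernel S f ?thh th xh x u (A \<times> UNIV) \<le> emeasure (gauss (transpose ?thh *v f xh u) S) A)
         \<and> (\<forall>B \<in> sets borel. sub_kernel S f ?thh th xh x u (UNIV \<times> B) \<le> emeasure (gauss (transpose th *v f x u) S) B)
         \<and> h xh = h x"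
      using key[where x=x] unfolding px prod.case by blast
  qed
  have A3: "\<forall>(xh, x) \<in> sim_rel. \<forall>u \<in> space U. \<forall>A \<in> sets borel.
           (\<integral>\<^sup>+ xp. indicator A (xp + transpose ?thh *v (f xh u - f x u), xp)
               \<partial>gauss (transpose th *v f x u) S) \<ge> sub_kernel S f ?thh th xh x u A"
  proof (intro ballI)
    fix p :: "(real^'n) \<times> (real^'n)" assume p: "p \<in> sim_rel"
    obtain x where px: "p = (x, x)" using p by (auto simp: sim_rel_def)
    show "case p of (xh, x) \<Rightarrow> \<forall>u \<in> space U. \<forall>A \<in> sets borel.
           (\<integral>\<^sup>+ xp. indicator A (xp + transpose ?thh *v (f xh u - f x u), xp)
               \<partial>gauss (transpose th *v f x u) S) \<ge> sub_kernel S f ?thh th xh x u A"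
      using key[where x=x] unfolding px prod.case by blast
  qed
  show "let thh = ?thh;
         v = sub_kernel S f thh th;
         r = ?r;
         \<delta> = (\<lambda>xh u. 1 - 2 * std_normal_cdf (- (sqrt r / 2) * norm (f xh u)))
     in (x0, x0) \<in> sim_rel
      \<and> (\<forall>(xh, x) \<in> sim_rel. \<forall>u \<in> space U.
           measure_space UNIV (sets borel) (v xh x u)
         \<and> v xh x u UNIV \<le> 1
         \<and> v xh x u UNIV = v xh x u sim_rel
         \<and> ennreal (1 - \<delta> xh u) \<le> v xh x u sim_rel
         \<and> (\<forall>A \<in> sets borel. v xh x u (A \<times> UNIV) \<le> emeasure (gauss (transpose thh *v f xh u) S) A)
         \<and> (\<forall>B \<in> sets borel. v xh x u (UNIV \<times> B) \<le> emeasure (gauss (transpose th *v f x u) S) B)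
         \<and> h xh = h x)
      \<and> (\<forall>(xh, x) \<in> sim_rel. \<forall>u \<in> space U. \<forall>A \<in> sets borel.
           (\<integral>\<^sup>+ xp. indicator A (xp + transpose thh *v (f xh u - f x u), xp)
               \<partial>gauss (transpose th *v f x u) S) \<ge> v xh x u A)"
    unfolding Let_def using A1 A2 A3 by (simp only:)
qed

end
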